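(* Fix $n\ge2$. Under the coupling described in the context, for any $t\ge0$, $\delta>0$ and $\mathbf{y}\in\mathbb{R}_+^{n-1}$, $$\lim_{\tilde{\mathbf{y}}\to\mathbf{y}}\mathbb{P}_{\mathbf{y},\tilde{\mathbf{y}}}\Big(\sum_{i=1}^{n-1}|Y_i(t)-\tilde Y_i(t)|\ge\delta\Big)=0.$$ In particular, the gap process has the weak Feller property: for every bounded continuous $f$ and $t\ge0$, $\mathbf{y}\mapsto\mathbb{E}_{\mathbf{y}}f(\mathbf{Y}(t))$ is bounded and continuous.
   Context: Fix $n\ge 2$ and a probability law $\theta$ on $(0,\infty)$ with mean $1$. The $n$-particle Stochastic Follow-the-Leader system $\mathbf{X}=(X_1,\dots,X_n)$ on $\mathbb{R}$ evolves as a pure jump Markov process: the leader $X_1$ jumps forward at rate $1$ with i.i.d. jump sizes of law $\theta$; for $i\ge2$, $X_i$ jumps at rate $X_{i-1}-X_i$ to a uniform location in $(X_i,X_{i-1})$. Gaps: $Y_i=X_i-X_{i+1}$. Coupling: two systems $\mathbf{X},\tilde{\mathbf{X}}$ with $X_1(0)=\tilde X_1(0)$; the leaders use the same jump times and sizes (so $X_1\equiv\tilde X_1$). For each $i\in[n-1]$, at time $t$ let $m_i=Y_i\wedge\tilde Y_i$, $n_i=|Y_i-\tilde Y_i|$, and call the $(i+1)$-th particle with larger gap ahead the "faster" one. At rate $m_i+n_i$ (independently over $i$) an event occurs for the pair $(X_{i+1},\tilde X_{i+1})$: with probability $n_i/(m_i+n_i)$ the faster particle jumps forward by a $\mathrm{U}(0,n_i)$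 amount and the slower does not move; with probability $m_i/(m_i+n_i)$ the faster particle jumps forward by $U^*\sim\mathrm{U}(n_i,m_i+n_i)$ and the slower simultaneously jumps forward by $U^*-n_i$. Each marginal is a copy of the original system. $\mathbb{P}_{\mathbf{y},\tilde{\mathbf{y}}}$ denotes the law of the coupled gap processes $(\mathbf{Y},\tilde{\mathbf{Y}})$ with $\mathbf{Y}(0)=\mathbf{y}$, $\tilde{\mathbf{Y}}(0)=\tilde{\mathbf{y}}$. *)

theory Defs
  imports "HOL-Probability.Probability"
begin

text \<open>Gap vectors of the n-particle system are functions nat => real supported on
  indices 1..n-1 (gap i = X_i - X_{i+1}). The state space R_+^{n-1}:\<close>

definition gap_space :: "nat \<Rightarrow> (nat \<Rightarrow> real) set" where
  "gap_space n = {y. (\<forall>i\<in>{1..n-1}. 0 \<le> y i) \<and> (\<forall>i. i \<notin> {1..n-1} \<longrightarrow> y i = 0)}"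

text \<open>Underlying probability space: an i.i.d. sequence of triples (E_k, U_k, J_k)
  with E_k ~ Exp(1), U_k ~ U(0,1), J_k ~ theta, all independent.\<close>

definition step_law :: "real measure \<Rightarrow> (real \<times> real \<times> real) measure" where
  "step_law \<theta> = density lborel (\<lambda>x. ennreal (exponential_density 1 x))
      \<Otimes>\<^sub>M (uniform_measure lborel {0..1} \<Otimes>\<^sub>M \<theta>)"

definition SFL_space :: "real measure \<Rightarrow> (nat \<Rightarrow> real \<times> real \<times> real) measure" where
  "SFL_space \<theta> = PiM UNIV (\<lambda>_. step_law \<theta>)"

text \<open>Move the (i+1)-th particle forward by d: gap i shrinks, gap i+1 grows.\<close>

definition gap_move :: "nat \<Rightarrow> nat \<Rightarrow> real \<Rightarrow> (nat \<Rightarrow> real) \<Rightarrow> (nat \<Rightarrow> real)" where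
  "gap_move n i d y = (y(i := y i - d))(Suc i := (if Suc i < n then y (Suc i) + d else y (Suc i)))"

definition srate :: "nat \<Rightarrow> (nat \<Rightarrow> real) \<Rightarrow> real" where
  "srate n y = 1 + (\<Sum>j=1..n-1. y j)"

definition sstep :: "nat \<Rightarrow> (nat \<Rightarrow> real) \<Rightarrow> real \<Rightarrow> real \<Rightarrow> (nat \<Rightarrow> real)" where
  "sstep n y u J =
    (let v = u * srate n y in
     if v < 1 then y(1 := y 1 + J)
     else if (\<exists>i\<in>{1..n-1}. v < 1 + (\<Sum>j=1..i. y j)) then
       (let i = (LEAST i. i \<in> {1..n-1} \<and> v < 1 + (\<Sum>j=1..i. y j));
            w = v - (1 + (\<Sum>j\<in>{1..<i}. y j))
        in gap_move n i w y)
     else y)"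

primrec sstate :: "nat \<Rightarrow> (nat \<Rightarrow> real) \<Rightarrow> (nat \<Rightarrow> real \<times> real \<times> real) \<Rightarrow> nat \<Rightarrow> (nat \<Rightarrow> real)" where
  "sstate n y0 \<omega> 0 = y0"
| "sstate n y0 \<omega> (Suc k) = sstep n (sstate n y0 \<omega> k) (fst (snd (\<omega> k))) (snd (snd (\<omega> k)))"

primrec stime :: "nat \<Rightarrow> (nat \<Rightarrow> real) \<Rightarrow> (nat \<Rightarrow> real \<times> real \<times> real) \<Rightarrow> nat \<Rightarrow> real" where
  "stime n y0 \<omega> 0 = 0"
| "stime n y0 \<omega> (Suc k) = stime n y0 \<omega> k + fst (\<omega> k) / srate n (sstate n y0 \<omega> k)"

text \<open>Gap vector Y(t) started from y0 (convention on the null explosion event: y0).\<close>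
definition sgaps_at :: "nat \<Rightarrow> (nat \<Rightarrow> real) \<Rightarrow> (nat \<Rightarrow> real \<times> real \<times> real) \<Rightarrow> real \<Rightarrow> (nat \<Rightarrow> real)" where
  "sgaps_at n y0 \<omega> t =
     (if \<exists>k. t < stime n y0 \<omega> (Suc k) then sstate n y0 \<omega> (LEAST k. t < stime n y0 \<omega> (Suc k)) else y0)"

type_synonym cstate = "(nat \<Rightarrow> real) \<times> (nat \<Rightarrow> real)"

text \<open>Total rate: leader rate 1 plus, for each pair i, m_i + n_i = max(Y_i, Y~_i).\<close>
definition crate :: "nat \<Rightarrow> cstate \<Rightarrow> real" where
  "crate n s = 1 + (\<Sum>j=1..n-1. max (fst s j) (snd s j))"

text \<open>Given the pair event for gap i and W ~ U(0, m_i+n_i): the faster particle jumps W,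
  the slower jumps max 0 (W - n_i); this realises both branches of the coupling.\<close>
definition cstep :: "nat \<Rightarrow> cstate \<Rightarrow> real \<Rightarrow> real \<Rightarrow> cstate" where
  "cstep n s u J =
    (let y = fst s; z = snd s; M = (\<lambda>j. max (y j) (z j)); v = u * crate n s in
     if v < 1 then (y(1 := y 1 + J), z(1 := z 1 + J))
     else if (\<exists>i\<in>{1..n-1}. v < 1 + (\<Sum>j=1..i. M j)) then
       (let i = (LEAST i. i \<in> {1..n-1} \<and> v < 1 + (\<Sum>j=1..i. M j));
            w = v - (1 + (\<Sum>j\<in>{1..<i}. M j));
            d = \<bar>y i - z i\<bar>;
            dy = (if z i \<le> y i then w else max 0 (w - d));
            dz = (if y i \<le> z i then w else max 0 (w - d))
        in (gap_move n i dy y, gap_move n i dz z))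
     else s)"

primrec cstate :: "nat \<Rightarrow> cstate \<Rightarrow> (nat \<Rightarrow> real \<times> real \<times> real) \<Rightarrow> nat \<Rightarrow> cstate" where
  "cstate n s0 \<omega> 0 = s0"
| "cstate n s0 \<omega> (Suc k) = cstep n (cstate n s0 \<omega> k) (fst (snd (\<omega> k))) (snd (snd (\<omega> k)))"

primrec ctime :: "nat \<Rightarrow> cstate \<Rightarrow> (nat \<Rightarrow> real \<times> real \<times> real) \<Rightarrow> nat \<Rightarrow> real" where
  "ctime n s0 \<omega> 0 = 0"
| "ctime n s0 \<omega> (Suc k) = ctime n s0 \<omega> k + fst (\<omega> k) / crate n (cstate n s0 \<omega> k)"

definition cgaps_at :: "nat \<Rightarrow> cstate \<Rightarrow> (nat \<Rightarrow> real \<times> real \<times> real) \<Rightarrow> real \<Rightarrow> cstate" where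
  "cgaps_at n s0 \<omega> t =
     (if \<exists>k. t < ctime n s0 \<omega> (Suc k) then cstate n s0 \<omega> (LEAST k. t < ctime n s0 \<omega> (Suc k)) else s0)"

definition coupled_prob :: "real measure \<Rightarrow> nat \<Rightarrow> (nat \<Rightarrow> real) \<Rightarrow> (nat \<Rightarrow> real) \<Rightarrow> real
    \<Rightarrow> (cstate \<Rightarrow> bool) \<Rightarrow> real" where
  "coupled_prob \<theta> n y y' t P =
     measure (SFL_space \<theta>) {\<omega> \<in> space (SFL_space \<theta>). P (cgaps_at n (y, y') \<omega> t)}"

definition gap_expect :: "real measure \<Rightarrow> nat \<Rightarrow> (nat \<Rightarrow> real) \<Rightarrow> real \<Rightarrow> ((nat \<Rightarrow> real) \<Rightarrow> real) \<Rightarrow> real" where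
  "gap_expect \<theta> n y t f = integral\<^sup>L (SFL_space \<theta>) (\<lambda>\<omega>. f (sgaps_at n y \<omega> t))"

end

theory Submission
  imports Defs
begin

definition dist1 :: "nat \<Rightarrow> cstate \<Rightarrow> real" where
  "dist1 n s = (\<Sum>i=1..n-1. \<bar>fst s i - snd s i\<bar>)"

lemma key_ineq:
  fixes a b w :: real
  assumes "0 \<le> w"
    and "dy = (if b \<le> a then w else max 0 (w - \<bar>a - b\<bar>))"
    and "dz = (if a \<le> b then w else max 0 (w - \<bar>a - b\<bar>))"
  shows "\<bar>(a - dy) - (b - dz)\<bar> + \<bar>dy - dz\<bar> \<le> \<bar>a - b\<bar>"
  using assms by (auto simp: abs_if max_def split: if_splits)

lemma gm_pair:
  assumes i: "i \<in> {1..n-1}" and key: "\<bar>(y i - dy) - (z i - dz)\<bar> + \<bar>dy - dz\<bar> \<le> \<bar>y i - z i\<bar>"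
  shows "dist1 n (gap_move n i dy y, gap_move n i dz z) \<le> dist1 n (y, z)"
proof -
  let ?c = "\<bar>dy - dz\<bar>"
  let ?G = "\<lambda>j. \<bar>y j - z j\<bar>"
  let ?H = "\<lambda>j. ?G j + (if j = Suc i then ?c else 0) - (if j = i then ?c else 0)"
  have le: "\<bar>gap_move n i dy y j - gap_move n i dz z j\<bar> \<le> ?H j" if "j \<in> {1..n-1}" for j
    using key that i by (auto simp: gap_move_def abs_if split: if_splits)
  have "dist1 n (gap_move n i dy y, gap_move n i dz z) \<le> sum ?H {1..n-1}"
    unfolding dist1_def by (rule sum_mono) (use le in auto)
  also have "sum ?H {1..n-1} = sum ?G {1..n-1} + (\<Sum>j\<in>{1..n-1}. if j = Suc i then ?c else 0) - ?c"
    using i by (simp add: sum_subtractf sum.distrib)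
  also have "(\<Sum>j\<in>{1..n-1}. if j = Suc i then ?c else 0) \<le> ?c"
    by (simp add: sum.delta)
  finally show ?thesis by (simp add: dist1_def)
qed

lemma least_w_nonneg:
  fixes M :: "nat \<Rightarrow> real"
  assumes ex: "\<exists>i\<in>{1..n-1}. v < 1 + (\<Sum>j=1..i. M j)" and v1: "\<not> v < 1"
  defines "i \<equiv> (LEAST i. i \<in> {1..n-1} \<and> v < 1 + (\<Sum>j=1..i. M j))"
  shows "i \<in> {1..n-1}" "v < 1 + (\<Sum>j=1..i. M j)" "0 \<le> v - (1 + (\<Sum>j\<in>{1..<i}. M j))"
proof -
  have P: "i \<in> {1..n-1} \<and> v < 1 + (\<Sum>j=1..i. M j)"
    unfolding i_def using ex by (metis (mono_tags, lifting) LeastI)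
  then show "i \<in> {1..n-1}" "v < 1 + (\<Sum>j=1..i. M j)" by auto
  show "0 \<le> v - (1 + (\<Sum>j\<in>{1..<i}. M j))"
  proof (cases "i = 1")
    case True then show ?thesis using v1 by simp
  next
    case False
    with P have "i - 1 \<in> {1..n-1}" "i - 1 < i" by auto
    then have "\<not> (i - 1 \<in> {1..n-1} \<and> v < 1 + (\<Sum>j=1..i-1. M j))"
      unfolding i_def using not_less_Least by blast
    then have "\<not> v < 1 + (\<Sum>j=1..i-1. M j)" using \<open>i - 1 \<in> {1..n-1}\<close> by blast
    moreover have "{1..<i} = {1..i-1}" using False P by auto
    ultimately show ?thesis by simp
  qed
qed

lemma cstep_contr: "dist1 n (cstep n s u J) \<le> dist1 n s"
proof -
  obtain y z where s: "s = (y, z)" by (cases s)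
  define M where "M = (\<lambda>j. max (y j) (z j))"
  define v where "v = u * crate n s"
  show ?thesis
  proof (cases "v < 1")
    case True
    then have "cstep n s u J = (y(1 := y 1 + J), z(1 := z 1 + J))"
      by (simp add: cstep_def s v_def Let_def)
    moreover have "dist1 n (y(1 := y 1 + J), z(1 := z 1 + J)) = dist1 n (y, z)"
      unfolding dist1_def by (rule sum.cong) auto
    ultimately show ?thesis using s by simp
  next
    case v1: False
    show ?thesis
    proof (cases "\<exists>i\<in>{1..n-1}. v < 1 + (\<Sum>j=1..i. M j)")
      case False
      then have "cstep n s u J = s" using v1
        by (simp add: cstep_def s v_def Let_def M_def)
      then show ?thesis by simp
    next
      case ex: True
      define i where "i = (LEAST i. i \<in> {1..n-1} \<and> v < 1 + (\<Sum>j=1..i. M j))"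
      define w where "w = v - (1 + (\<Sum>j\<in>{1..<i}. M j))"
      define d where "d = \<bar>y i - z i\<bar>"
      define dy where "dy = (if z i \<le> y i then w else max 0 (w - d))"
      define dz where "dz = (if y i \<le> z i then w else max 0 (w - d))"
      have i: "i \<in> {1..n-1}" and w0: "0 \<le> w"
        using least_w_nonneg[OF ex v1] unfolding i_def w_def by auto
      have "cstep n s u J = (gap_move n i dy y, gap_move n i dz z)"
        using ex v1 by (simp add: cstep_def s v_def Let_def M_def i_def w_def d_def dy_def dz_def)
      moreover have "dist1 n (gap_move n i dy y, gap_move n i dz z) \<le> dist1 n (y, z)"
        by (rule gm_pair[OF i key_ineq[OF w0]]) (auto simp: dy_def dz_def d_def)
      ultimately show ?thesis using s by simp
    qed
  qed
qed

lemma cstate_contr: "dist1 n (cstate n s0 \<omega> k) \<le> dist1 n s0"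
  by (induction k) (auto intro: order_trans[OF cstep_contr])

lemma cgaps_contr: "dist1 n (cgaps_at n s0 \<omega> t) \<le> dist1 n s0"
  unfolding cgaps_at_def using cstate_contr by auto

lemma coord_tendsto: "((\<lambda>x::nat \<Rightarrow> real. x i) \<longlongrightarrow> y i) (at y within S)"
proof -
  have "isCont (\<lambda>x::nat \<Rightarrow> real. x i) y"
    using continuous_on_product_coordinates[of i] continuous_on_eq_continuous_at open_UNIV by blast
  then show ?thesis unfolding isCont_def by (rule tendsto_mono[OF at_le, rotated]) simp
qed

lemma part1:
  assumes "0 < \<delta>"
  shows "((\<lambda>y'. coupled_prob \<theta> n y y' t
                 (\<lambda>s. \<delta> \<le> (\<Sum>i=1..n-1. \<bar>fst s i - snd s i\<bar>)))
              \<longlongrightarrow> 0) (at y within S)"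
proof -
  have "((\<lambda>y'. \<Sum>i=1..n-1. \<bar>y i - y' i\<bar>) \<longlongrightarrow> (\<Sum>i=1..n-1. \<bar>y i - y i\<bar>)) (at y within S)"
    by (intro tendsto_intros coord_tendsto)
  then have "((\<lambda>y'. \<Sum>i=1..n-1. \<bar>y i - y' i\<bar>) \<longlongrightarrow> 0) (at y within S)" by simp
  then have ev: "\<forall>\<^sub>F y' in at y within S. (\<Sum>i=1..n-1. \<bar>y i - y' i\<bar>) < \<delta>"
    using assms by (rule order_tendstoD)
  show ?thesis
  proof (rule tendsto_eventually, rule eventually_mono[OF ev])
    fix y' assume lt: "(\<Sum>i=1..n-1. \<bar>y i - y' i\<bar>) < \<delta>"
    have E: "{\<omega> \<in> space (SFL_space \<theta>). \<delta> \<le> (\<Sum>i=1..n-1. \<bar>fst (cgaps_at n (y, y') \<omega> t) i - snd (cgaps_at n (y, y') \<omega> t) i\<bar>)} = {}"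
      proof (safe)
      fix \<omega> assume "\<delta> \<le> (\<Sum>i=1..n-1. \<bar>fst (cgaps_at n (y, y') \<omega> t) i - snd (cgaps_at n (y, y') \<omega> t) i\<bar>)"
      moreover have "(\<Sum>i=1..n-1. \<bar>fst (cgaps_at n (y, y') \<omega> t) i - snd (cgaps_at n (y, y') \<omega> t) i\<bar>) \<le> (\<Sum>i=1..n-1. \<bar>y i - y' i\<bar>)"
        using cgaps_contr[of n "(y, y')" \<omega> t] unfolding dist1_def by simp
      ultimately show "\<omega> \<in> {}" using lt by simp
    qed
    then show "coupled_prob \<theta> n y y' t (\<lambda>s. \<delta> \<le> (\<Sum>i=1..n-1. \<bar>fst s i - snd s i\<bar>)) = 0"
      unfolding coupled_prob_def by (simp only: E measure_empty)
  qed
qed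


lemma tendsto_coord: "(Y \<longlongrightarrow> y0) F \<Longrightarrow> ((\<lambda>c. (Y c :: nat \<Rightarrow> real) j) \<longlongrightarrow> y0 j) F"
proof -
  assume "(Y \<longlongrightarrow> y0) F"
  moreover have "isCont (\<lambda>x::nat \<Rightarrow> real. x j) y0"
    using continuous_on_product_coordinates[of j] continuous_on_eq_continuous_at open_UNIV by blast
  ultimately show ?thesis by (rule isCont_tendsto_compose[rotated])
qed

lemma tendsto_fun_coord:
  assumes "\<And>j. ((\<lambda>c. (Y c :: nat \<Rightarrow> real) j) \<longlongrightarrow> y0 j) F"
  shows "(Y \<longlongrightarrow> y0) F"
proof -
  have "limitin (product_topology (\<lambda>_. euclidean) UNIV) Y y0 F"
    unfolding limitin_componentwise using assms by (simp add: limitin_canonical_iff)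
  then show ?thesis by (simp add: euclidean_product_topology limitin_canonical_iff)
qed

lemma gap_move_tendsto:
  assumes "(d \<longlongrightarrow> d0) F" "(Y \<longlongrightarrow> y0) F"
  shows "((\<lambda>c. gap_move n i (d c) (Y c)) \<longlongrightarrow> gap_move n i d0 y0) F"
proof (rule tendsto_fun_coord)
  fix j
  show "((\<lambda>c. gap_move n i (d c) (Y c) j) \<longlongrightarrow> gap_move n i d0 y0 j) F"
    unfolding gap_move_def using assms(1) tendsto_coord[OF assms(2)]
    by (auto intro!: tendsto_intros)
qed

lemma upd1_tendsto:
  fixes Y :: "'a \<Rightarrow> nat \<Rightarrow> real"
  assumes "(Y \<longlongrightarrow> y0) F"
  shows "((\<lambda>c. (Y c)(1 := Y c 1 + J)) \<longlongrightarrow> y0(1 := y0 1 + J)) F"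
proof (rule tendsto_fun_coord)
  fix j
  show "((\<lambda>c. ((Y c)(1 := Y c 1 + J)) j) \<longlongrightarrow> (y0(1 := y0 1 + J)) j) F"
    using tendsto_coord[OF assms] by (auto intro!: tendsto_intros)
qed

lemma srate_tendsto: "(Y \<longlongrightarrow> y0) F \<Longrightarrow> ((\<lambda>c. srate n (Y c)) \<longlongrightarrow> srate n y0) F"
  unfolding srate_def by (intro tendsto_intros tendsto_coord)

definition nb :: "nat \<Rightarrow> (nat \<Rightarrow> real) \<Rightarrow> real \<Rightarrow> bool" where
  "nb n x u = (u * srate n x \<noteq> 1 \<and> (\<forall>i\<in>{1..n-1}. u * srate n x \<noteq> 1 + (\<Sum>j=1..i. x j)))"

lemma ev_same_side:
  fixes a b :: "(nat \<Rightarrow> real) \<Rightarrow> real"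
  assumes "(a \<longlongrightarrow> a x) (at x)" "(b \<longlongrightarrow> b x) (at x)" "a x \<noteq> b x"
  shows "\<forall>\<^sub>F y in at x. (a y < b y) = (a x < b x)"
proof -
  have lim: "((\<lambda>y. a y - b y) \<longlongrightarrow> a x - b x) (at x)" using assms by (intro tendsto_intros)
  show ?thesis
  proof (cases "a x < b x")
    case True
    then have "\<forall>\<^sub>F y in at x. a y - b y < 0" using lim by (intro order_tendstoD) auto
    then show ?thesis by eventually_elim (use True in auto)
  next
    case False
    then have "\<forall>\<^sub>F y in at x. a y - b y > 0" using lim assms(3) by (intro order_tendstoD) auto
    then show ?thesis by eventually_elim (use False in auto)
  qed
qed

lemma sstep_cont:
  assumes nbx: "nb n x u"
  shows "isCont (\<lambda>y. sstep n y u J) x"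
proof -
  define V where "V = (\<lambda>y. u * srate n y)"
  define T where "T = (\<lambda>i (y::nat\<Rightarrow>real). 1 + (\<Sum>j=1..i. y j))"
  define S where "S = {1..n-1}"
  have idt: "((\<lambda>y. y) \<longlongrightarrow> x) (at x)" by (rule tendsto_ident_at)
  have Vt: "(V \<longlongrightarrow> V x) (at x)" unfolding V_def by (intro tendsto_intros srate_tendsto idt)
  have Tt: "(T i \<longlongrightarrow> T i x) (at x)" for i unfolding T_def by (intro tendsto_intros tendsto_coord idt)
  have ev1: "\<forall>\<^sub>F y in at x. (V y < 1) = (V x < 1)"
    using ev_same_side[of V x "\<lambda>_. 1"] Vt nbx by (auto simp: nb_def V_def)
  have ev2: "\<forall>\<^sub>F y in at x. \<forall>i\<in>S. (V y < T i y) = (V x < T i x)"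
    unfolding S_def
    by (rule eventually_ball_finite) (use ev_same_side[OF Vt Tt] nbx in \<open>auto simp: nb_def V_def T_def\<close>)
  define i0 where "i0 = (LEAST i. i \<in> S \<and> V x < T i x)"
  define H where "H = (\<lambda>y. if V x < 1 then y(1 := y 1 + J)
      else if (\<exists>i\<in>S. V x < T i x) then gap_move n i0 (V y - (1 + (\<Sum>j\<in>{1..<i0}. y j))) y else y)"
  have eq: "sstep n y u J = H y" if h1: "(V y < 1) = (V x < 1)" and h2: "\<forall>i\<in>S. (V y < T i y) = (V x < T i x)" for y
  proof -
    have ex: "(\<exists>i\<in>S. V y < T i y) = (\<exists>i\<in>S. V x < T i x)" using h2 by blast
    have "(\<lambda>i. i \<in> S \<and> V y < T i y) = (\<lambda>i. i \<in> S \<and> V x < T i x)" using h2 by blast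
    then have le: "(LEAST i. i \<in> S \<and> V y < T i y) = i0" unfolding i0_def by simp
    show ?thesis
      using h1 ex le unfolding sstep_def H_def Let_def
      by (simp add: V_def T_def S_def)
  qed
  have evq: "\<forall>\<^sub>F y in at x. sstep n y u J = H y"
    using ev1 ev2 by eventually_elim (rule eq)
  have Hx: "H x = sstep n x u J" using eq[of x] by simp
  have "(H \<longlongrightarrow> H x) (at x)"
  proof (cases "V x < 1")
    case True
    have "((\<lambda>y. y(1 := y 1 + J)) \<longlongrightarrow> x(1 := x 1 + J)) (at x)"
      using upd1_tendsto[OF idt, of J] .
    then show ?thesis using True unfolding H_def by simp
  next
    case F: False
    show ?thesis
    proof (cases "\<exists>i\<in>S. V x < T i x")
      case True
      have "((\<lambda>y. V y - (1 + (\<Sum>j\<in>{1..<i0}. y j))) \<longlongrightarrow> V x - (1 + (\<Sum>j\<in>{1..<i0}. x j))) (at x)"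
        by (intro tendsto_intros Vt tendsto_coord[OF idt])
      from gap_move_tendsto[OF this idt, of n i0] F True show ?thesis unfolding H_def by simp
    next
      case False then show ?thesis using F unfolding H_def by (simp add: idt)
    qed
  qed
  then have "((\<lambda>y. sstep n y u J) \<longlongrightarrow> H x) (at x)"
    by (rule Lim_transform_eventually) (use evq in \<open>auto elim: eventually_mono\<close>)
  then show ?thesis unfolding isCont_def Hx .
qed

lemma sstate_cont:
  assumes "\<forall>k. nb n (sstate n y \<omega> k) (fst (snd (\<omega> k)))"
  shows "isCont (\<lambda>y'. sstate n y' \<omega> k) y"
proof (induction k)
  case 0 then show ?case by simp
next
  case (Suc k)
  have "isCont (\<lambda>z. sstep n z (fst (snd (\<omega> k))) (snd (snd (\<omega> k)))) (sstate n y \<omega> k)"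
    using assms by (intro sstep_cont) auto
  from isCont_tendsto_compose[OF this Suc[unfolded isCont_def]] show ?case by (simp add: isCont_def)
qed

lemma stime_cont:
  assumes "\<forall>k. nb n (sstate n y \<omega> k) (fst (snd (\<omega> k)))"
    and "\<forall>k. srate n (sstate n y \<omega> k) \<noteq> 0"
  shows "isCont (\<lambda>y'. stime n y' \<omega> k) y"
proof (induction k)
  case 0 then show ?case by simp
next
  case (Suc k)
  have "isCont (\<lambda>y'. srate n (sstate n y' \<omega> k)) y"
    using sstate_cont[OF assms(1), of k] unfolding isCont_def by (rule srate_tendsto)
  then have "isCont (\<lambda>y'. fst (\<omega> k) / srate n (sstate n y' \<omega> k)) y"
    using assms(2) by (intro continuous_intros) auto
  with Suc show ?case by (simp add: continuous_intros)
qed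

lemma sgaps_cont:
  assumes nb: "\<forall>k. nb n (sstate n y \<omega> k) (fst (snd (\<omega> k)))"
    and nz: "\<forall>k. srate n (sstate n y \<omega> k) \<noteq> 0"
    and ne: "\<forall>k. t \<noteq> stime n y \<omega> (Suc k)"
    and ex: "\<exists>k. t < stime n y \<omega> (Suc k)"
  shows "isCont (\<lambda>y'. sgaps_at n y' \<omega> t) y"
proof -
  define K where "K = (LEAST k. t < stime n y \<omega> (Suc k))"
  have K1: "t < stime n y \<omega> (Suc K)" unfolding K_def using ex by (rule LeastI_ex)
  have K2: "stime n y \<omega> (Suc k) < t" if "k < K" for k
    using not_less_Least[OF that[unfolded K_def]] ne[rule_format, of k] unfolding K_def by auto
  have tc: "\<And>k. ((\<lambda>y'. stime n y' \<omega> k) \<longlongrightarrow> stime n y \<omega> k) (at y)"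
    using stime_cont[OF nb nz] unfolding isCont_def by blast
  have e1: "\<forall>\<^sub>F y' in at y. t < stime n y' \<omega> (Suc K)"
    using order_tendstoD(1)[OF tc[of "Suc K"] K1] .
  have e2: "\<forall>\<^sub>F y' in at y. \<forall>k\<in>{..<K}. stime n y' \<omega> (Suc k) < t"
    by (rule eventually_ball_finite) (use order_tendstoD(2)[OF tc K2] in auto)
  have eq: "sgaps_at n y' \<omega> t = sstate n y' \<omega> K"
    if "t < stime n y' \<omega> (Suc K)" "\<forall>k\<in>{..<K}. stime n y' \<omega> (Suc k) < t" for y'
  proof -
    have "(LEAST k. t < stime n y' \<omega> (Suc k)) = K"
    proof (rule Least_equality)
      show "t < stime n y' \<omega> (Suc K)" by fact
      fix m assume m: "t < stime n y' \<omega> (Suc m)"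
      show "K \<le> m"
      proof (rule ccontr)
        assume "\<not> K \<le> m"
        then have "stime n y' \<omega> (Suc m) < t" using that(2) by auto
        with m show False by simp
      qed
    qed
    then show ?thesis using that unfolding sgaps_at_def by auto
  qed
  have evq: "\<forall>\<^sub>F y' in at y. sstate n y' \<omega> K = sgaps_at n y' \<omega> t"
    using e1 e2 by eventually_elim (simp add: eq)
  have "sgaps_at n y \<omega> t = sstate n y \<omega> K" using eq K1 K2 by auto
  moreover have "((\<lambda>y'. sgaps_at n y' \<omega> t) \<longlongrightarrow> sstate n y \<omega> K) (at y)"
    using sstate_cont[OF nb, of K] unfolding isCont_def
    by (rule Lim_transform_eventually) (rule evq)
  ultimately show ?thesis unfolding isCont_def by simp
qed


lemma sets_step_law: "sets \<theta> = sets borel \<Longrightarrow> sets (step_law \<theta>) = sets (borel \<Otimes>\<^sub>M (borel \<Otimes>\<^sub>M borel))"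
  unfolding step_law_def by (intro sets_pair_measure_cong) auto

lemma meas_E: "sets \<theta> = sets borel \<Longrightarrow> (\<lambda>\<omega>. fst (\<omega> k)) \<in> borel_measurable (SFL_space \<theta>)"
  and meas_U: "sets \<theta> = sets borel \<Longrightarrow> (\<lambda>\<omega>. fst (snd (\<omega> k))) \<in> borel_measurable (SFL_space \<theta>)"
  and meas_J: "sets \<theta> = sets borel \<Longrightarrow> (\<lambda>\<omega>. snd (snd (\<omega> k))) \<in> borel_measurable (SFL_space \<theta>)"
proof -
  assume h: "sets \<theta> = sets borel"
  have c: "(\<lambda>\<omega>. \<omega> k) \<in> measurable (SFL_space \<theta>) (borel \<Otimes>\<^sub>M (borel \<Otimes>\<^sub>M borel))"
  proof -
    have "(\<lambda>\<omega>. \<omega> k) \<in> measurable (SFL_space \<theta>) (step_law \<theta>)"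
      unfolding SFL_space_def by (rule measurable_component_singleton) simp
    then show ?thesis using measurable_cong_sets[OF refl sets_step_law[OF h], of "SFL_space \<theta>"] by simp
  qed
  show "(\<lambda>\<omega>. fst (\<omega> k)) \<in> borel_measurable (SFL_space \<theta>)"
       "(\<lambda>\<omega>. fst (snd (\<omega> k))) \<in> borel_measurable (SFL_space \<theta>)"
       "(\<lambda>\<omega>. snd (snd (\<omega> k))) \<in> borel_measurable (SFL_space \<theta>)"
    using c by (auto intro: measurable_compose[OF c])
qed

definition cm :: "'a measure \<Rightarrow> ('a \<Rightarrow> nat \<Rightarrow> real) \<Rightarrow> bool" where
  "cm M X = (\<forall>j. (\<lambda>\<omega>. X \<omega> j) \<in> borel_measurable M)"

lemma gap_move_apply: "gap_move n i d x j = (if j = Suc i then (if Suc i < n then x (Suc i) + d else x (Suc i)) else if j = i then x i - d else x j)"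
  unfolding gap_move_def by simp

lemma sstep_meas:
  assumes X: "cm M X" and U[measurable]: "U \<in> borel_measurable M" and Jm[measurable]: "Jm \<in> borel_measurable M"
  shows "cm M (\<lambda>\<omega>. sstep n (X \<omega>) (U \<omega>) (Jm \<omega>))"
  unfolding cm_def
proof
  fix j
  have Xj[measurable]: "\<And>j. (\<lambda>\<omega>. X \<omega> j) \<in> borel_measurable M" using X by (simp add: cm_def)
  have Ss[measurable]: "\<And>i. (\<lambda>\<omega>. \<Sum>j=1..i. X \<omega> j) \<in> borel_measurable M" by (rule borel_measurable_sum) simp
  have Ss2[measurable]: "\<And>i. (\<lambda>\<omega>. \<Sum>j\<in>{1..<i}. X \<omega> j) \<in> borel_measurable M" by (rule borel_measurable_sum) simp
  define V where "V = (\<lambda>\<omega>. U \<omega> * srate n (X \<omega>))"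
  have V[measurable]: "V \<in> borel_measurable M" unfolding V_def srate_def
    by (intro borel_measurable_times U borel_measurable_add borel_measurable_const Ss)
  define I where "I = (\<lambda>\<omega>. LEAST i. i \<in> {1..n-1} \<and> V \<omega> < 1 + (\<Sum>j=1..i. X \<omega> j))"
  have I[measurable]: "I \<in> measurable M (count_space UNIV)" unfolding I_def by measurable
  define F where "F = (\<lambda>i \<omega>. gap_move n i (V \<omega> - (1 + (\<Sum>j\<in>{1..<i}. X \<omega> j))) (X \<omega>) j)"
  have F: "(\<lambda>\<omega>. F i \<omega>) \<in> borel_measurable M" for i
    unfolding F_def gap_move_apply
    by (cases "j = Suc i"; cases "j = i"; cases "Suc i < n") simp_all
  have F2: "(\<lambda>\<omega>. F (I \<omega>) \<omega>) \<in> borel_measurable M"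
    by (rule measurable_compose_countable[OF F I])
  have eq: "(\<lambda>\<omega>. sstep n (X \<omega>) (U \<omega>) (Jm \<omega>) j) =
    (\<lambda>\<omega>. if V \<omega> < 1 then ((X \<omega>)(1 := X \<omega> 1 + Jm \<omega>)) j
       else if (\<exists>i\<in>{1..n-1}. V \<omega> < 1 + (\<Sum>j=1..i. X \<omega> j)) then F (I \<omega>) \<omega> else X \<omega> j)"
    unfolding sstep_def Let_def V_def F_def I_def by auto
  have A1: "(\<lambda>\<omega>. ((X \<omega>)(1 := X \<omega> 1 + Jm \<omega>)) j) \<in> borel_measurable M"
    by (cases "j = 1") simp_all
  have P1: "{\<omega> \<in> space M. V \<omega> < 1} \<in> sets M" by measurable
  have P2: "{\<omega> \<in> space M. \<exists>i\<in>{1..n-1}. V \<omega> < 1 + (\<Sum>j=1..i. X \<omega> j)} \<in> sets M" by measurable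
  show "(\<lambda>\<omega>. sstep n (X \<omega>) (U \<omega>) (Jm \<omega>) j) \<in> borel_measurable M"
    unfolding eq by (rule measurable_If[OF A1 measurable_If[OF F2 Xj P2] P1])
qed

lemma sstate_meas:
  assumes "sets \<theta> = sets borel"
  shows "cm (SFL_space \<theta>) (\<lambda>\<omega>. sstate n y \<omega> k)"
proof (induction k)
  case 0 then show ?case by (simp add: cm_def)
next
  case (Suc k)
  then show ?case using sstep_meas[OF Suc meas_U[OF assms] meas_J[OF assms]] by simp
qed

lemma stime_meas:
  assumes "sets \<theta> = sets borel"
  shows "(\<lambda>\<omega>. stime n y \<omega> k) \<in> borel_measurable (SFL_space \<theta>)"
proof (induction k)
  case 0 then show ?case by simp
next
  case (Suc k)
  have [measurable]: "(\<lambda>\<omega>. sstate n y \<omega> k j) \<in> borel_measurable (SFL_space \<theta>)" for j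
    using sstate_meas[OF assms] by (simp add: cm_def)
  have [measurable]: "(\<lambda>\<omega>. fst (\<omega> k)) \<in> borel_measurable (SFL_space \<theta>)" using meas_E[OF assms] .
  note [measurable] = Suc
  show ?case by (simp add: srate_def) measurable
qed

lemma sgaps_meas:
  assumes "sets \<theta> = sets borel"
  shows "cm (SFL_space \<theta>) (\<lambda>\<omega>. sgaps_at n y \<omega> t)"
  unfolding cm_def
proof
  fix j
  have [measurable]: "(\<lambda>\<omega>. stime n y \<omega> k) \<in> borel_measurable (SFL_space \<theta>)" for k
    using stime_meas[OF assms] .
  have S: "(\<lambda>\<omega>. sstate n y \<omega> k j) \<in> borel_measurable (SFL_space \<theta>)" for k
    using sstate_meas[OF assms] by (simp add: cm_def)
  have L[measurable]: "(\<lambda>\<omega>. LEAST k. t < stime n y \<omega> (Suc k)) \<in> measurable (SFL_space \<theta>) (count_space UNIV)"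
    by measurable
  have SL: "(\<lambda>\<omega>. sstate n y \<omega> (LEAST k. t < stime n y \<omega> (Suc k)) j) \<in> borel_measurable (SFL_space \<theta>)"
    by (rule measurable_compose_countable[OF S L])
  have P: "{\<omega> \<in> space (SFL_space \<theta>). \<exists>k. t < stime n y \<omega> (Suc k)} \<in> sets (SFL_space \<theta>)"
  proof (intro sets.sets_Collect_countable_Ex)
    fix k
    have "(\<lambda>\<omega>. stime n y \<omega> (Suc k)) \<in> borel_measurable (SFL_space \<theta>)" using stime_meas[OF assms] .
    then show "{\<omega> \<in> space (SFL_space \<theta>). t < stime n y \<omega> (Suc k)} \<in> sets (SFL_space \<theta>)"
      by measurable
  qed
  show "(\<lambda>\<omega>. sgaps_at n y \<omega> t j) \<in> borel_measurable (SFL_space \<theta>)"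
  proof -
    have "(\<lambda>\<omega>. if \<exists>k. t < stime n y \<omega> (Suc k) then sstate n y \<omega> (LEAST k. t < stime n y \<omega> (Suc k)) j else y j) \<in> borel_measurable (SFL_space \<theta>)"
      using measurable_If[OF SL borel_measurable_const P] .
    moreover have "(\<lambda>\<omega>. sgaps_at n y \<omega> t j) = (\<lambda>\<omega>. if \<exists>k. t < stime n y \<omega> (Suc k) then sstate n y \<omega> (LEAST k. t < stime n y \<omega> (Suc k)) j else y j)"
      unfolding sgaps_at_def by auto
    ultimately show ?thesis by simp
  qed
qed

lemma cm_borel: "cm M X \<Longrightarrow> X \<in> borel_measurable M"
  unfolding cm_def by (rule measurable_coordinatewise_then_product) auto


locale sfl =
  fixes \<theta> :: "real measure"
  assumes th_prob: "prob_space \<theta>" and th_sets: "sets \<theta> = sets borel"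
    and th_pos: "emeasure \<theta> {0<..} = 1"
    and th_int: "integrable \<theta> (\<lambda>x. x)" and th_mean: "integral\<^sup>L \<theta> (\<lambda>x. x) = 1"
begin

abbreviation "Eexp \<equiv> density lborel (\<lambda>x. ennreal (exponential_density 1 x))"
abbreviation "Uni \<equiv> uniform_measure lborel {0..1::real}"

lemma prob_E: "prob_space Eexp"
  using prob_space_exponential_density[of 1] by simp

lemma prob_U: "prob_space Uni"
  by (rule prob_space_uniform_measure) auto

lemma prob_UT: "prob_space (Uni \<Otimes>\<^sub>M \<theta>)"
  by (rule prob_space_pair[OF prob_U th_prob])

lemma prob_step: "prob_space (step_law \<theta>)"
  unfolding step_law_def by (rule prob_space_pair[OF prob_E prob_UT])

lemma space_th: "space \<theta> = UNIV"
  using sets_eq_imp_space_eq[OF th_sets] by simp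

lemma space_step: "space (step_law \<theta>) = UNIV"
  unfolding step_law_def by (simp add: space_pair_measure space_th)

lemma step_Times:
  assumes "A \<in> sets borel" "B \<in> sets borel" "C \<in> sets borel"
  shows "emeasure (step_law \<theta>) (A \<times> B \<times> C) = emeasure Eexp A * emeasure Uni B * emeasure \<theta> C"
proof -
  interpret UT: prob_space "Uni \<Otimes>\<^sub>M \<theta>" by (rule prob_UT)
  interpret T: prob_space \<theta> by (rule th_prob)
  have "emeasure (step_law \<theta>) (A \<times> B \<times> C) = emeasure Eexp A * emeasure (Uni \<Otimes>\<^sub>M \<theta>) (B \<times> C)"
    unfolding step_law_def using assms th_sets by (intro UT.emeasure_pair_measure_Times) auto
  also have "emeasure (Uni \<Otimes>\<^sub>M \<theta>) (B \<times> C) = emeasure Uni B * emeasure \<theta> C"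
    using assms th_sets by (intro T.emeasure_pair_measure_Times) auto
  finally show ?thesis by (simp add: mult.assoc)
qed

lemma step_sets_Times:
  assumes "A \<in> sets borel" "B \<in> sets borel" "C \<in> sets borel"
  shows "A \<times> B \<times> C \<in> sets (step_law \<theta>)"
  unfolding step_law_def using assms th_sets by (auto intro!: pair_measureI)

lemma E_atomless: "emeasure (step_law \<theta>) {z \<in> space (step_law \<theta>). fst z = c} = 0"
proof -
  have "{z \<in> space (step_law \<theta>). fst z = c} = {c} \<times> UNIV \<times> UNIV" by (auto simp: space_step)
  moreover have "emeasure Eexp {c} = 0"
    by (subst emeasure_density) (auto intro!: nn_integral_null_set)
  ultimately show ?thesis using step_Times[of "{c}" UNIV UNIV] by simp
qed

lemma U_atomless: "emeasure (step_law \<theta>) {z \<in> space (step_law \<theta>). fst (snd z) = c} = 0"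
proof -
  have "{z \<in> space (step_law \<theta>). fst (snd z) = c} = UNIV \<times> {c} \<times> UNIV" by (auto simp: space_step)
  moreover have "emeasure Uni {c} = 0"
  proof -
    have "emeasure lborel ({0..1} \<inter> {c}) = 0"
      by (rule countable_imp_null_set_lborel[THEN null_setsD1]) auto
    then show ?thesis by simp
  qed
  ultimately show ?thesis using step_Times[of UNIV "{c}" UNIV] by simp
qed

lemma AE_E_nonneg: "AE z in step_law \<theta>. 0 \<le> fst z"
proof -
  have "emeasure Eexp {..<0} = 0"
    by (subst emeasure_density) (auto simp: exponential_density_def indicator_def intro!: nn_integral_zero')
  then have "emeasure (step_law \<theta>) ({..<0} \<times> UNIV \<times> UNIV) = 0" using step_Times[of "{..<0}" UNIV UNIV] by simp
  moreover have "{..<0::real} \<times> (UNIV::real set) \<times> (UNIV::real set) \<in> sets (step_law \<theta>)"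
    by (rule step_sets_Times) auto
  ultimately show ?thesis
    by (intro AE_I[where N="{..<0} \<times> UNIV \<times> UNIV"]) (auto simp: space_step)
qed

lemma AE_J_pos: "AE z in step_law \<theta>. 0 < snd (snd z)"
proof -
  interpret T: prob_space \<theta> by (rule th_prob)
  have ev: "{0::real<..} \<in> sets \<theta>" using th_sets by simp
  have m1: "measure \<theta> {0<..} = 1" using th_pos T.emeasure_eq_measure by simp
  have "measure \<theta> (space \<theta> - {0<..}) = 1 - measure \<theta> {0<..}" by (rule T.prob_compl[OF ev])
  moreover have "space \<theta> - {0<..} = {..0::real}" using space_th by auto
  ultimately have "measure \<theta> {..0} = 0" using m1 by simp
  then have "emeasure \<theta> {..0} = 0" using T.emeasure_eq_measure by simp
  then have "emeasure (step_law \<theta>) (UNIV \<times> UNIV \<times> {..0}) = 0"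
    using step_Times[of UNIV UNIV "{..0}"] by simp
  moreover have "(UNIV::real set) \<times> (UNIV::real set) \<times> {..0::real} \<in> sets (step_law \<theta>)"
    by (rule step_sets_Times) auto
  ultimately show ?thesis
    by (intro AE_I[where N="UNIV \<times> UNIV \<times> {..0}"]) (auto simp: space_step)
qed


sublocale SS: sequence_space "step_law \<theta>"
  by (simp add: sequence_space_def product_prob_space_def product_prob_space_axioms_def
      product_sigma_finite_def prob_step prob_space_imp_sigma_finite)

abbreviation "\<Omega> \<equiv> SFL_space \<theta>"

lemma Omega_eq: "SFL_space \<theta> = SS.S" unfolding SFL_space_def ..

lemma prob_Omega: "prob_space \<Omega>" unfolding Omega_eq by (rule SS.prob_space_axioms)

lemma null_future:
  fixes g :: "real \<times> real \<times> real \<Rightarrow> real" and h :: "(nat \<Rightarrow> real \<times> real \<times> real) \<Rightarrow> real"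
  assumes g[measurable]: "g \<in> borel_measurable (step_law \<theta>)"
    and atom: "\<And>c. emeasure (step_law \<theta>) {z \<in> space (step_law \<theta>). g z = c} = 0"
    and h[measurable]: "h \<in> borel_measurable \<Omega>"
    and past: "\<And>\<omega> \<omega>'. (\<forall>j<k. \<omega> j = \<omega>' j) \<Longrightarrow> h \<omega> = h \<omega>'"
  shows "emeasure \<Omega> {\<omega> \<in> space \<Omega>. g (\<omega> k) = h \<omega>} = 0"
proof -
  let ?A = "{\<omega> \<in> space SS.S. g (\<omega> k) = h \<omega>}"
  have hS[measurable]: "h \<in> borel_measurable SS.S" using h unfolding Omega_eq .
  have ck[measurable]: "(\<lambda>\<omega>. \<omega> k) \<in> measurable SS.S (step_law \<theta>)"
    by (rule measurable_component_singleton) simp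
  have gk[measurable]: "(\<lambda>\<omega>. g (\<omega> k)) \<in> borel_measurable SS.S" by (rule measurable_compose[OF ck g])
  have A: "?A \<in> sets SS.S" by measurable
  let ?F = "\<lambda>(\<omega>, \<omega>'). comb_seq k \<omega> \<omega>'"
  have "emeasure SS.S ?A = emeasure (distr (SS.S \<Otimes>\<^sub>M SS.S) SS.S ?F) ?A"
    unfolding SS.PiM_comb_seq ..
  also have "\<dots> = emeasure (SS.S \<Otimes>\<^sub>M SS.S) (?F -` ?A \<inter> space (SS.S \<Otimes>\<^sub>M SS.S))"
    by (rule emeasure_distr[OF measurable_comb_seq A])
  also have "?F -` ?A \<inter> space (SS.S \<Otimes>\<^sub>M SS.S) = {p \<in> space (SS.S \<Otimes>\<^sub>M SS.S). g (snd p 0) = h (fst p)}"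
  proof -
    have "g (comb_seq k \<omega> \<omega>' k) = g (\<omega>' 0)" for \<omega> \<omega>' :: "nat \<Rightarrow> real \<times> real \<times> real"
      using comb_seq_add[of k \<omega> \<omega>' 0] by simp
    moreover have "h (comb_seq k \<omega> \<omega>') = h \<omega>" for \<omega> \<omega>'
      by (rule past) (simp add: comb_seq_less)
    moreover have "comb_seq k \<omega> \<omega>' \<in> space SS.S" if "(\<omega>, \<omega>') \<in> space (SS.S \<Otimes>\<^sub>M SS.S)" for \<omega> \<omega>'
      using measurable_space[OF measurable_comb_seq that] by simp
    ultimately show ?thesis by auto
  qed
  also have "emeasure (SS.S \<Otimes>\<^sub>M SS.S) {p \<in> space (SS.S \<Otimes>\<^sub>M SS.S). g (snd p 0) = h (fst p)} =
      (\<integral>\<^sup>+\<omega>. emeasure SS.S (Pair \<omega> -` {p \<in> space (SS.S \<Otimes>\<^sub>M SS.S). g (snd p 0) = h (fst p)}) \<partial>SS.S)"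
    by (rule SS.emeasure_pair_measure_alt) measurable
  also have "\<dots> = (\<integral>\<^sup>+\<omega>. 0 \<partial>SS.S)"
  proof (rule nn_integral_cong)
    fix \<omega> assume \<omega>: "\<omega> \<in> space SS.S"
    have "Pair \<omega> -` {p \<in> space (SS.S \<Otimes>\<^sub>M SS.S). g (snd p 0) = h (fst p)} =
        {\<omega>' \<in> space SS.S. \<omega>' 0 \<in> {z \<in> space (step_law \<theta>). g z = h \<omega>}}"
      using \<omega> by (auto simp: space_pair_measure space_PiM)
    moreover have "{z \<in> space (step_law \<theta>). g z = h \<omega>} \<in> sets (step_law \<theta>)" by measurable
    ultimately show "emeasure SS.S (Pair \<omega> -` {p \<in> space (SS.S \<Otimes>\<^sub>M SS.S). g (snd p 0) = h (fst p)}) = 0"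
      using SS.emeasure_PiM_Collect_single[of 0 "{z \<in> space (step_law \<theta>). g z = h \<omega>}"] atom by simp
  qed
  finally show ?thesis unfolding Omega_eq by simp
qed

end


lemma sstate_past: "(\<forall>j<k. \<omega> j = \<omega>' j) \<Longrightarrow> sstate n y \<omega> k = sstate n y \<omega>' k"
  by (induction k) auto

lemma stime_past: "(\<forall>j<k. \<omega> j = \<omega>' j) \<Longrightarrow> stime n y \<omega> k = stime n y \<omega>' k"
proof (induction k)
  case 0 then show ?case by simp
next
  case (Suc k)
  then have "stime n y \<omega> k = stime n y \<omega>' k" by auto
  moreover have "sstate n y \<omega> k = sstate n y \<omega>' k" using Suc.prems by (intro sstate_past) auto
  ultimately show ?case using Suc.prems by simp
qed

lemma sstep_cases:
  fixes x :: "nat \<Rightarrow> real"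
  obtains (leader) "sstep n x u J = x(1 := x 1 + J)"
  | (move) i w where "i \<in> {1..n-1}" "0 \<le> w" "w < x i" "sstep n x u J = gap_move n i w x"
  | (none) "sstep n x u J = x"
proof -
  define v where "v = u * srate n x"
  show ?thesis
  proof (cases "v < 1")
    case True then show ?thesis using leader by (simp add: sstep_def v_def Let_def)
  next
    case v1: False
    show ?thesis
    proof (cases "\<exists>i\<in>{1..n-1}. v < 1 + (\<Sum>j=1..i. x j)")
      case False then show ?thesis using none v1 by (simp add: sstep_def v_def Let_def)
    next
      case ex: True
      define i where "i = (LEAST i. i \<in> {1..n-1} \<and> v < 1 + (\<Sum>j=1..i. x j))"
      define w where "w = v - (1 + (\<Sum>j\<in>{1..<i}. x j))"
      have i: "i \<in> {1..n-1}" and lt: "v < 1 + (\<Sum>j=1..i. x j)" and w0: "0 \<le> w"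
        using least_w_nonneg[OF ex v1] unfolding i_def w_def by auto
      have "(\<Sum>j=1..i. x j) = (\<Sum>j\<in>{1..<i}. x j) + x i"
        using i by (metis Suc_le_eq atLeastLessThanSuc_atLeastAtMost atLeastAtMost_iff sum.atLeast_Suc_lessThan sum.atLeastLessThan_Suc)
      then have "w < x i" using lt unfolding w_def by simp
      moreover have "sstep n x u J = gap_move n i w x"
        using ex v1 by (simp add: sstep_def v_def Let_def i_def w_def)
      ultimately show ?thesis using move i w0 by blast
    qed
  qed
qed

lemma sstep_nonneg:
  assumes "\<forall>i. 0 \<le> x i" "0 \<le> J"
  shows "\<forall>i. 0 \<le> sstep n x u J i"
proof (cases rule: sstep_cases[of n x u J])
  case leader then show ?thesis using assms by simp
next
  case (move i w) then show ?thesis using assms by (auto simp: gap_move_apply)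
next
  case none then show ?thesis using assms by simp
qed

lemma srate_step:
  assumes "\<forall>i. 0 \<le> x i" "0 \<le> J" "2 \<le> n"
  shows "srate n (sstep n x u J) \<le> srate n x + J"
proof (cases rule: sstep_cases[of n x u J])
  case leader
  have "(\<Sum>j=1..n-1. (x(1 := x 1 + J)) j) = (\<Sum>j=1..n-1. x j + (if j = 1 then J else 0))"
    by (rule sum.cong) auto
  also have "\<dots> = (\<Sum>j=1..n-1. x j) + J" using assms(3) by (simp add: sum.distrib)
  finally show ?thesis using leader by (simp add: srate_def)
next
  case (move i w)
  have "(\<Sum>j=1..n-1. gap_move n i w x j) \<le> (\<Sum>j=1..n-1. x j + (if j = Suc i then w else 0) - (if j = i then w else 0))"
    by (rule sum_mono) (auto simp: gap_move_apply)
  also have "\<dots> = (\<Sum>j=1..n-1. x j) + (\<Sum>j=1..n-1. if j = Suc i then w else 0) - w"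
    using move by (simp add: sum_subtractf sum.distrib)
  also have "(\<Sum>j=1..n-1. if j = Suc i then w else 0) \<le> w" using move by simp
  finally show ?thesis using move assms by (simp add: srate_def)
next
  case none then show ?thesis using assms by simp
qed

lemma srate_ge1: "\<forall>i. 0 \<le> x i \<Longrightarrow> 1 \<le> srate n x"
  unfolding srate_def by (simp add: sum_nonneg)

lemma not_nb:
  assumes "\<not> nb n x u" "srate n x \<noteq> 0"
  shows "u = 1 / srate n x \<or> (\<exists>i\<in>{1..n-1}. u = (1 + (\<Sum>j=1..i. x j)) / srate n x)"
  using assms unfolding nb_def by (auto simp: field_simps)


context sfl begin

lemma AE_JE: "AE \<omega> in \<Omega>. \<forall>k. 0 < snd (snd (\<omega> k)) \<and> 0 \<le> fst (\<omega> k)"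
proof -
  have "AE \<omega> in \<Omega>. 0 < snd (snd (\<omega> k)) \<and> 0 \<le> fst (\<omega> k)" for k
  proof -
    have "AE z in step_law \<theta>. 0 < snd (snd z) \<and> 0 \<le> fst z" using AE_J_pos AE_E_nonneg by eventually_elim auto
    then show ?thesis unfolding SFL_space_def
      by (rule AE_PiM_component[OF prob_step UNIV_I, where P="\<lambda>z. 0 < snd (snd z) \<and> 0 \<le> fst z"])
  qed
  then show ?thesis by (simp add: AE_all_countable)
qed

lemma states_nonneg:
  assumes "\<forall>i. 0 \<le> y i" "\<forall>k. 0 < snd (snd (\<omega> k))"
  shows "\<forall>i. 0 \<le> sstate n y \<omega> k i"
proof (induction k)
  case 0 then show ?case using assms by simp
next
  case (Suc k)
  have "0 \<le> snd (snd (\<omega> k))" using assms(2) less_imp_le by blast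
  from sstep_nonneg[OF Suc.IH this] show ?case by simp
qed

lemma AE_ne_future:
  fixes g :: "real \<times> real \<times> real \<Rightarrow> real" and h :: "(nat \<Rightarrow> real \<times> real \<times> real) \<Rightarrow> real"
  assumes g[measurable]: "g \<in> borel_measurable (step_law \<theta>)"
    and atom: "\<And>c. emeasure (step_law \<theta>) {z \<in> space (step_law \<theta>). g z = c} = 0"
    and h[measurable]: "h \<in> borel_measurable \<Omega>"
    and past: "\<And>\<omega> \<omega>'. (\<forall>j<k. \<omega> j = \<omega>' j) \<Longrightarrow> h \<omega> = h \<omega>'"
  shows "AE \<omega> in \<Omega>. g (\<omega> k) \<noteq> h \<omega>"
proof -
  have ck: "(\<lambda>\<omega>. \<omega> k) \<in> measurable \<Omega> (step_law \<theta>)"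
    unfolding SFL_space_def by (rule measurable_component_singleton) simp
  have [measurable]: "(\<lambda>\<omega>. g (\<omega> k)) \<in> borel_measurable \<Omega>" by (rule measurable_compose[OF ck g])
  have "{\<omega> \<in> space \<Omega>. g (\<omega> k) = h \<omega>} \<in> sets \<Omega>" by measurable
  then show ?thesis
    using null_future[OF g atom h past] by (subst AE_iff_measurable[OF _ refl]) auto
qed

lemma meas_step_fst: "fst \<in> borel_measurable (step_law \<theta>)"
  and meas_step_U: "(\<lambda>z. fst (snd z)) \<in> borel_measurable (step_law \<theta>)"
  unfolding step_law_def by measurable

lemma state_coord_meas[measurable]: "(\<lambda>\<omega>. sstate n y \<omega> k j) \<in> borel_measurable \<Omega>"
  using sstate_meas[OF th_sets] by (simp add: cm_def)

lemma stime_meas'[measurable]: "(\<lambda>\<omega>. stime n y \<omega> k) \<in> borel_measurable \<Omega>"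
  using stime_meas[OF th_sets] .

lemma srate_meas[measurable]: "(\<lambda>\<omega>. srate n (sstate n y \<omega> k)) \<in> borel_measurable \<Omega>"
  unfolding srate_def by measurable

lemma AE_nb:
  assumes y: "\<forall>i. 0 \<le> y i"
  shows "AE \<omega> in \<Omega>. \<forall>k. nb n (sstate n y \<omega> k) (fst (snd (\<omega> k)))"
proof -
  have "AE \<omega> in \<Omega>. nb n (sstate n y \<omega> k) (fst (snd (\<omega> k)))" for k
  proof -
    define h where "h = (\<lambda>i \<omega>. (if i = 0 then 1 else 1 + (\<Sum>j=1..i. sstate n y \<omega> k j)) / srate n (sstate n y \<omega> k))"
    have "AE \<omega> in \<Omega>. fst (snd (\<omega> k)) \<noteq> h i \<omega>" for i
    proof (rule AE_ne_future[OF meas_step_U U_atomless])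
      show "h i \<in> borel_measurable \<Omega>" unfolding h_def by measurable
      fix \<omega> \<omega>' :: "nat \<Rightarrow> real \<times> real \<times> real" assume "\<forall>j<k. \<omega> j = \<omega>' j"
      then show "h i \<omega> = h i \<omega>'" unfolding h_def using sstate_past[of k \<omega> \<omega>' n y] by simp
    qed
    then have "AE \<omega> in \<Omega>. \<forall>i. fst (snd (\<omega> k)) \<noteq> h i \<omega>" by (simp add: AE_all_countable)
    then show ?thesis using AE_JE
    proof eventually_elim
      case (elim \<omega>)
      then have "\<forall>i. 0 \<le> sstate n y \<omega> k i" using states_nonneg[OF y] by auto
      then have "1 \<le> srate n (sstate n y \<omega> k)" by (rule srate_ge1)
      then have s1: "srate n (sstate n y \<omega> k) \<noteq> 0" by simp
      show ?case
      proof (rule ccontr)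
        assume "\<not> nb n (sstate n y \<omega> k) (fst (snd (\<omega> k)))"
        from not_nb[OF this s1] have "\<exists>i. fst (snd (\<omega> k)) = h i \<omega>"
        proof
          assume "fst (snd (\<omega> k)) = 1 / srate n (sstate n y \<omega> k)"
          then have "fst (snd (\<omega> k)) = h 0 \<omega>" unfolding h_def by simp
          then show ?thesis ..
        next
          assume "\<exists>i\<in>{1..n-1}. fst (snd (\<omega> k)) = (1 + (\<Sum>j=1..i. sstate n y \<omega> k j)) / srate n (sstate n y \<omega> k)"
          then obtain i where "i \<in> {1..n-1}" "fst (snd (\<omega> k)) = (1 + (\<Sum>j=1..i. sstate n y \<omega> k j)) / srate n (sstate n y \<omega> k)" by blast
          then have "fst (snd (\<omega> k)) = h i \<omega>" unfolding h_def by simp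
          then show ?thesis ..
        qed
        then show False using elim by auto
      qed
    qed
  qed
  then show ?thesis by (simp add: AE_all_countable)
qed

lemma AE_srate:
  assumes y: "\<forall>i. 0 \<le> y i"
  shows "AE \<omega> in \<Omega>. \<forall>k. srate n (sstate n y \<omega> k) \<noteq> 0"
  using AE_JE
proof eventually_elim
  case (elim \<omega>)
  show ?case
  proof
    fix k
    have "\<forall>i. 0 \<le> sstate n y \<omega> k i" using states_nonneg[OF y] elim by auto
    then have "1 \<le> srate n (sstate n y \<omega> k)" by (rule srate_ge1)
    then show "srate n (sstate n y \<omega> k) \<noteq> 0" by simp
  qed
qed

lemma AE_t_ne:
  assumes y: "\<forall>i. 0 \<le> y i"
  shows "AE \<omega> in \<Omega>. \<forall>k. t \<noteq> stime n y \<omega> (Suc k)"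
proof -
  have "AE \<omega> in \<Omega>. t \<noteq> stime n y \<omega> (Suc k)" for k
  proof -
    define h where "h = (\<lambda>\<omega>. (t - stime n y \<omega> k) * srate n (sstate n y \<omega> k))"
    have "AE \<omega> in \<Omega>. fst (\<omega> k) \<noteq> h \<omega>"
    proof (rule AE_ne_future[OF meas_step_fst E_atomless])
      show "h \<in> borel_measurable \<Omega>" unfolding h_def by measurable
      fix \<omega> \<omega>' :: "nat \<Rightarrow> real \<times> real \<times> real" assume "\<forall>j<k. \<omega> j = \<omega>' j"
      then show "h \<omega> = h \<omega>'" unfolding h_def using sstate_past[of k \<omega> \<omega>' n y] stime_past[of k \<omega> \<omega>' n y] by simp
    qed
    then show ?thesis using AE_srate[OF y, of n]
    proof eventually_elim
      case (elim \<omega>)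
      then have "srate n (sstate n y \<omega> k) \<noteq> 0" by auto
      with elim show ?case unfolding h_def by (auto simp: field_simps)
    qed
  qed
  then show ?thesis by (simp add: AE_all_countable)
qed

end


definition good :: "(nat \<Rightarrow> real \<times> real \<times> real) \<Rightarrow> bool" where
  "good \<omega> = (\<forall>k. 0 < snd (snd (\<omega> k)) \<and> 0 \<le> fst (\<omega> k))"

lemma good_states_nonneg:
  assumes "\<forall>i. 0 \<le> y i" "good \<omega>"
  shows "\<forall>i. 0 \<le> sstate n y \<omega> k i"
proof (induction k)
  case 0 then show ?case using assms by simp
next
  case (Suc k)
  have "0 \<le> snd (snd (\<omega> k))" using assms(2) less_imp_le unfolding good_def by blast
  from sstep_nonneg[OF Suc.IH this] show ?case by simp
qed

lemma srate_bound:
  assumes y: "\<forall>i. 0 \<le> y i" and g: "good \<omega>" and n: "2 \<le> n"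
  shows "srate n (sstate n y \<omega> k) \<le> srate n y + (\<Sum>j<k. snd (snd (\<omega> j)))"
proof (induction k)
  case 0 then show ?case by simp
next
  case (Suc k)
  have J: "0 \<le> snd (snd (\<omega> k))" using g less_imp_le unfolding good_def by blast
  have "srate n (sstate n y \<omega> (Suc k)) \<le> srate n (sstate n y \<omega> k) + snd (snd (\<omega> k))"
    using srate_step[OF good_states_nonneg[OF y g] J n] by simp
  with Suc show ?case by simp
qed

lemma srate_pos:
  assumes y: "\<forall>i. 0 \<le> y i" and g: "good \<omega>"
  shows "1 \<le> srate n (sstate n y \<omega> k)"
  by (rule srate_ge1[OF good_states_nonneg[OF y g]])

lemma stime_mono:
  assumes y: "\<forall>i. 0 \<le> y i" and g: "good \<omega>" and "a \<le> b"
  shows "stime n y \<omega> a \<le> stime n y \<omega> b"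
  using assms(3)
proof (induction b)
  case 0 then show ?case by simp
next
  case (Suc b)
  have "0 \<le> fst (\<omega> b) / srate n (sstate n y \<omega> b)"
    using g srate_pos[OF y g, of n b] unfolding good_def by simp
  then show ?case using Suc by (cases "a = Suc b") auto
qed

lemma stime_block:
  assumes y: "\<forall>i. 0 \<le> y i" and g: "good \<omega>" and n: "2 \<le> n" and "a \<le> b"
  shows "(\<Sum>k\<in>{a..<b}. fst (\<omega> k)) / (srate n y + (\<Sum>j<b. snd (snd (\<omega> j)))) \<le> stime n y \<omega> b - stime n y \<omega> a"
  using assms(4)
proof (induction b)
  case 0 then show ?case by simp
next
  case (Suc b)
  let ?C = "srate n y"
  let ?S = "\<lambda>b. (\<Sum>j<b. snd (snd (\<omega> j)))"
  have C1: "1 \<le> ?C" using srate_ge1[OF y] .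
  have Sm: "?S b \<le> ?S (Suc b)" "0 \<le> ?S b"
    using g unfolding good_def by (auto intro: sum_nonneg less_imp_le)
  have E: "0 \<le> fst (\<omega> b)" using g unfolding good_def by blast
  show ?case
  proof (cases "a = Suc b")
    case True then show ?thesis by simp
  next
    case False
    then have ab: "a \<le> b" using Suc.prems by simp
    have IH: "(\<Sum>k\<in>{a..<b}. fst (\<omega> k)) / (?C + ?S b) \<le> stime n y \<omega> b - stime n y \<omega> a"
      using Suc.IH[OF ab] .
    have G0: "0 \<le> (\<Sum>k\<in>{a..<b}. fst (\<omega> k))" using g unfolding good_def by (auto intro: sum_nonneg)
    have "(\<Sum>k\<in>{a..<b}. fst (\<omega> k)) / (?C + ?S (Suc b)) \<le> (\<Sum>k\<in>{a..<b}. fst (\<omega> k)) / (?C + ?S b)"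
      using G0 Sm C1 by (intro divide_left_mono) auto
    moreover have "fst (\<omega> b) / (?C + ?S (Suc b)) \<le> fst (\<omega> b) / srate n (sstate n y \<omega> b)"
      using E srate_bound[OF y g n, of b] srate_pos[OF y g, of n b] Sm
      by (intro divide_left_mono) auto
    moreover have "(\<Sum>k\<in>{a..<Suc b}. fst (\<omega> k)) = (\<Sum>k\<in>{a..<b}. fst (\<omega> k)) + fst (\<omega> b)"
      using ab by simp
    ultimately show ?thesis using IH by (simp add: add_divide_distrib)
  qed
qed

lemma det_explode:
  fixes K :: real
  assumes y: "\<forall>i. 0 \<le> y i" and g: "good \<omega>" and n: "2 \<le> n" and K: "1 \<le> K" and t: "0 \<le> t"
    and io: "\<forall>M. \<exists>m\<ge>M. 2^m / 2 \<le> (\<Sum>k\<in>{2^m..<2*2^m}. fst (\<omega> k))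
                  \<and> (\<Sum>j<2*2^m. snd (snd (\<omega> j))) \<le> 2 * K * 2^m"
  shows "\<exists>k. t < stime n y \<omega> (Suc k)"
proof -
  let ?C = "srate n y"
  define c where "c = 1 / (2 + 4 * K)"
  have c0: "0 < c" using K unfolding c_def by simp
  have step: "\<exists>k'. stime n y \<omega> k + c \<le> stime n y \<omega> k'" for k
  proof -
    obtain M :: nat where M: "max (real k) ?C \<le> 2^M"
      using real_arch_pow[of 2 "max (real k) ?C"] by (auto intro: less_imp_le)
    obtain m where m: "m \<ge> M" and A1: "2^m / 2 \<le> (\<Sum>k\<in>{2^m..<2*2^m}. fst (\<omega> k))"
      and A2: "(\<Sum>j<2*2^m. snd (snd (\<omega> j))) \<le> 2 * K * 2^m"
      using io by blast
    define N :: real where "N = 2^m"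
    have NM: "(2::real)^M \<le> 2^m" using m by (intro power_increasing) auto
    have kN: "k \<le> (2::nat)^m"
    proof -
      have "real k \<le> real ((2::nat)^M)" using M by simp
      then have "k \<le> (2::nat)^M" by (simp only: of_nat_le_iff)
      moreover have "(2::nat)^M \<le> 2^m" using m by (rule power_increasing) simp
      ultimately show ?thesis by (rule order_trans)
    qed
    have "?C \<le> 2^M" using M by simp
    then have CN: "?C \<le> N" using NM unfolding N_def by (rule order_trans)
    have C1: "1 \<le> ?C" using srate_ge1[OF y] .
    have blk: "(\<Sum>k\<in>{2^m..<2*2^m}. fst (\<omega> k)) / (?C + (\<Sum>j<2*2^m. snd (snd (\<omega> j))))
        \<le> stime n y \<omega> (2*2^m) - stime n y \<omega> (2^m)"
      by (rule stime_block[OF y g n]) simp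
    have "c \<le> (N/2) / (N + 2 * K * N)"
    proof -
      have "N > 0" unfolding N_def by simp
      moreover have "0 < 1 + 2 * K" using K by simp
      moreover have "N + 2 * K * N = N * (1 + 2 * K)" by (simp add: algebra_simps)
      ultimately have "(N/2) / (N + 2 * K * N) = 1 / (2 + 4 * K)" by (simp add: divide_simps)
      then show ?thesis unfolding c_def by simp
    qed
    also have "\<dots> \<le> (\<Sum>k\<in>{2^m..<2*2^m}. fst (\<omega> k)) / (?C + (\<Sum>j<2*2^m. snd (snd (\<omega> j))))"
    proof (rule frac_le)
      show "0 \<le> (\<Sum>k\<in>{2^m..<2*2^m}. fst (\<omega> k))" using g unfolding good_def by (auto intro: sum_nonneg)
      show "N / 2 \<le> (\<Sum>k\<in>{2^m..<2*2^m}. fst (\<omega> k))" using A1 unfolding N_def by simp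
      have "0 \<le> (\<Sum>j<2*2^m. snd (snd (\<omega> j)))" using g unfolding good_def by (auto intro: sum_nonneg less_imp_le)
      then show "0 < ?C + (\<Sum>j<2*2^m. snd (snd (\<omega> j)))" using C1 by simp
      show "?C + (\<Sum>j<2*2^m. snd (snd (\<omega> j))) \<le> N + 2 * K * N" using CN A2 unfolding N_def by simp
    qed
    also note blk
    finally have "stime n y \<omega> (2^m) + c \<le> stime n y \<omega> (2*2^m)" by simp
    moreover have "stime n y \<omega> k \<le> stime n y \<omega> (2^m)" by (rule stime_mono[OF y g kN])
    ultimately show ?thesis by (intro exI[of _ "2*2^m"]) simp
  qed
  have L: "\<exists>k. real L * c \<le> stime n y \<omega> k" for L :: nat
  proof (induction L)
    case 0 then show ?case by (intro exI[of _ 0]) simp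
  next
    case (Suc L)
    then obtain k where "real L * c \<le> stime n y \<omega> k" by blast
    moreover obtain k' where "stime n y \<omega> k + c \<le> stime n y \<omega> k'" using step by blast
    ultimately show ?case by (intro exI[of _ k']) (simp add: algebra_simps)
  qed
  obtain L :: nat where "t / c < L" using reals_Archimedean2 by blast
  then have "t < real L * c" using c0 by (simp add: field_simps)
  then obtain k where k: "t < stime n y \<omega> k" using L by (meson less_le_trans)
  then have "k \<noteq> 0" using t by (cases k) auto
  then obtain k' where "k = Suc k'" by (cases k) auto
  then show ?thesis using k by blast
qed


context sfl begin

lemma th_nonneg: "AE x in \<theta>. 0 \<le> x"
proof -
  interpret T: prob_space \<theta> by (rule th_prob)
  have ev: "{0::real<..} \<in> sets \<theta>" using th_sets by simp
  have m1: "measure \<theta> {0<..} = 1" using th_pos T.emeasure_eq_measure by simp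
  have "measure \<theta> (space \<theta> - {0<..}) = 1 - measure \<theta> {0<..}" by (rule T.prob_compl[OF ev])
  moreover have "space \<theta> - {0<..} = {..0::real}" using space_th by auto
  ultimately have "measure \<theta> {..0} = 0" using m1 by simp
  then have "emeasure \<theta> {..0} = 0" using T.emeasure_eq_measure by simp
  moreover have "{..0::real} \<in> sets \<theta>" using th_sets by simp
  ultimately show ?thesis by (intro AE_I[where N="{..0}"]) (auto simp: space_th)
qed

lemma nn_theta: "(\<integral>\<^sup>+x. ennreal x \<partial>\<theta>) = 1"
  using nn_integral_eq_integral[OF th_int th_nonneg] th_mean by simp

lemma nn_pair_snd:
  assumes "prob_space A" "prob_space B" and f: "f \<in> borel_measurable B"
  shows "(\<integral>\<^sup>+z. f (snd z) \<partial>(A \<Otimes>\<^sub>M B)) = (\<integral>\<^sup>+y. f y \<partial>B)"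
proof -
  interpret B: prob_space B by fact
  interpret A: prob_space A by fact
  have "(\<integral>\<^sup>+z. f (snd z) \<partial>(A \<Otimes>\<^sub>M B)) = (\<integral>\<^sup>+x. \<integral>\<^sup>+y. f (snd (x, y)) \<partial>B \<partial>A)"
    by (rule B.nn_integral_fst[symmetric]) (use f in measurable)
  also have "\<dots> = (\<integral>\<^sup>+y. f y \<partial>B)" by (simp add: A.emeasure_space_1)
  finally show ?thesis .
qed

lemma nn_pair_fst:
  assumes "prob_space A" "prob_space B" and f: "f \<in> borel_measurable A"
  shows "(\<integral>\<^sup>+z. f (fst z) \<partial>(A \<Otimes>\<^sub>M B)) = (\<integral>\<^sup>+x. f x \<partial>A)"
proof -
  interpret B: prob_space B by fact
  have "(\<integral>\<^sup>+z. f (fst z) \<partial>(A \<Otimes>\<^sub>M B)) = (\<integral>\<^sup>+x. \<integral>\<^sup>+y. f (fst (x, y)) \<partial>B \<partial>A)"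
    by (rule B.nn_integral_fst[symmetric]) (use f in measurable)
  also have "\<dots> = (\<integral>\<^sup>+x. f x \<partial>A)" by (simp add: B.emeasure_space_1)
  finally show ?thesis .
qed

lemma nn_step_J: "(\<integral>\<^sup>+z. ennreal (snd (snd z)) \<partial>step_law \<theta>) = 1"
proof -
  have m1: "(\<lambda>y. ennreal y) \<in> borel_measurable \<theta>"
  proof -
    have "(\<lambda>y::real. ennreal y) \<in> borel_measurable borel" by measurable
    then show ?thesis by (subst measurable_cong_sets[OF th_sets refl])
  qed
  have m2: "(\<lambda>y. ennreal (snd y)) \<in> borel_measurable (Uni \<Otimes>\<^sub>M \<theta>)"
    using measurable_compose[OF measurable_snd m1, of Uni] by simp
  have "(\<integral>\<^sup>+z. ennreal (snd (snd z)) \<partial>step_law \<theta>) = (\<integral>\<^sup>+y. ennreal (snd y) \<partial>(Uni \<Otimes>\<^sub>M \<theta>))"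
    unfolding step_law_def by (rule nn_pair_snd[OF prob_E prob_UT m2])
  also have "\<dots> = (\<integral>\<^sup>+y. ennreal y \<partial>\<theta>)"
    by (rule nn_pair_snd[OF prob_U th_prob m1])
  finally show ?thesis using nn_theta by simp
qed

lemma nn_Eexp: "(\<integral>\<^sup>+x. ennreal (exp (- x)) \<partial>Eexp) = 1/2"
proof -
  have "(\<integral>\<^sup>+x. ennreal (exp (- x)) \<partial>Eexp) = (\<integral>\<^sup>+x. ennreal (exponential_density 1 x) * ennreal (exp (- x)) \<partial>lborel)"
    by (rule nn_integral_density) auto
  also have "\<dots> = (\<integral>\<^sup>+x. ennreal (exponential_density 2 x) * ennreal (1/2) \<partial>lborel)"
  proof (rule nn_integral_cong)
    fix x :: real
    have eq: "exponential_density 1 x * exp (- x) = exponential_density 2 x * (1/2)"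
      by (auto simp: exponential_density_def mult_exp_exp)
    have n1: "0 \<le> exponential_density 1 x" "0 \<le> exponential_density 2 x"
      by (auto simp: exponential_density_def)
    have "ennreal (exponential_density 1 x) * ennreal (exp (- x)) = ennreal (exponential_density 1 x * exp (- x))"
      using n1 by (simp add: ennreal_mult)
    also have "\<dots> = ennreal (exponential_density 2 x * (1/2))" using eq by simp
    also have "\<dots> = ennreal (exponential_density 2 x) * ennreal (1/2)"
      by (rule ennreal_mult) (simp_all add: n1)
    finally show "ennreal (exponential_density 1 x) * ennreal (exp (- x)) = ennreal (exponential_density 2 x) * ennreal (1/2)" .
  qed
  also have "\<dots> = (\<integral>\<^sup>+x. ennreal (exponential_density 2 x) \<partial>lborel) * ennreal (1/2)"
    by (rule nn_integral_multc) simp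
  also have "(\<integral>\<^sup>+x. ennreal (exponential_density 2 x) \<partial>lborel) = emeasure (density lborel (\<lambda>x. ennreal (exponential_density 2 x))) UNIV"
    by (subst emeasure_density) auto
  also have "\<dots> = 1"
    using prob_space.emeasure_space_1[OF prob_space_exponential_density[of 2]] by simp
  finally show ?thesis using divide_ennreal[of 1 2] by simp
qed

lemma nn_step_E: "(\<integral>\<^sup>+z. ennreal (exp (- fst z)) \<partial>step_law \<theta>) = 1/2"
  unfolding step_law_def using nn_Eexp
  by (subst nn_pair_fst[OF prob_E prob_UT]) auto

lemma nn_Omega_comp:
  assumes g: "g \<in> borel_measurable (step_law \<theta>)"
  shows "(\<integral>\<^sup>+\<omega>. g (\<omega> j) \<partial>\<Omega>) = (\<integral>\<^sup>+z. g z \<partial>step_law \<theta>)"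
proof -
  have cj: "(\<lambda>\<omega>. \<omega> j) \<in> measurable SS.S (step_law \<theta>)"
    by (rule measurable_component_singleton) simp
  have "(\<integral>\<^sup>+z. g z \<partial>step_law \<theta>) = (\<integral>\<^sup>+z. g z \<partial>distr SS.S (step_law \<theta>) (\<lambda>\<omega>. \<omega> j))"
    using SS.PiM_component[of j] by simp
  also have "\<dots> = (\<integral>\<^sup>+\<omega>. g (\<omega> j) \<partial>SS.S)"
    by (rule nn_integral_distr[OF cj]) (simp add: g)
  finally show ?thesis unfolding Omega_eq by simp
qed

lemma nn_prod:
  assumes J: "finite J" and g: "g \<in> borel_measurable (step_law \<theta>)"
  shows "(\<integral>\<^sup>+\<omega>. (\<Prod>k\<in>J. g (\<omega> k)) \<partial>\<Omega>) = (\<integral>\<^sup>+z. g z \<partial>step_law \<theta>) ^ card J"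
proof -
  have r: "(\<lambda>x. restrict x J) \<in> measurable SS.S (PiM J (\<lambda>_. step_law \<theta>))"
    by (rule measurable_restrict_subset) simp
  have gm: "(\<lambda>x. \<Prod>k\<in>J. g (x k)) \<in> borel_measurable (PiM J (\<lambda>_. step_law \<theta>))"
    using g by measurable
  have "(\<integral>\<^sup>+x. (\<Prod>k\<in>J. g (x k)) \<partial>PiM J (\<lambda>_. step_law \<theta>)) = (\<Prod>k\<in>J. \<integral>\<^sup>+z. g z \<partial>step_law \<theta>)"
    by (rule SS.product_nn_integral_prod[OF J]) (simp add: g)
  moreover have "(\<integral>\<^sup>+x. (\<Prod>k\<in>J. g (x k)) \<partial>PiM J (\<lambda>_. step_law \<theta>)) =
      (\<integral>\<^sup>+x. (\<Prod>k\<in>J. g (x k)) \<partial>distr SS.S (PiM J (\<lambda>_. step_law \<theta>)) (\<lambda>x. restrict x J))"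
    using SS.distr_PiM_restrict_finite[OF J] by simp
  moreover have "\<dots> = (\<integral>\<^sup>+\<omega>. (\<Prod>k\<in>J. g (restrict \<omega> J k)) \<partial>SS.S)"
    by (rule nn_integral_distr[OF r]) (use gm in simp)
  moreover have "\<dots> = (\<integral>\<^sup>+\<omega>. (\<Prod>k\<in>J. g (\<omega> k)) \<partial>SS.S)"
    by (intro nn_integral_cong prod.cong) auto
  ultimately show ?thesis unfolding Omega_eq by simp
qed

end


context sfl begin

lemma E_meas[measurable]: "(\<lambda>\<omega>. fst (\<omega> k)) \<in> borel_measurable \<Omega>"
  using meas_E[OF th_sets] .

lemma J_meas[measurable]: "(\<lambda>\<omega>. snd (snd (\<omega> k))) \<in> borel_measurable \<Omega>"
  using meas_J[OF th_sets] .

lemma expE_step_meas: "(\<lambda>z. ennreal (exp (- fst z))) \<in> borel_measurable (step_law \<theta>)"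
  using meas_step_fst by measurable

lemma J_step_meas: "(\<lambda>z. ennreal (snd (snd z))) \<in> borel_measurable (step_law \<theta>)"
  unfolding step_law_def
proof -
  have "(\<lambda>y::real. ennreal y) \<in> borel_measurable borel" by measurable
  then have m1: "(\<lambda>y. ennreal y) \<in> borel_measurable \<theta>" by (subst measurable_cong_sets[OF th_sets refl])
  have "(\<lambda>z. snd (snd z)) \<in> measurable (Eexp \<Otimes>\<^sub>M (Uni \<Otimes>\<^sub>M \<theta>)) \<theta>" by measurable
  from measurable_compose[OF this m1]
  show "(\<lambda>z. ennreal (snd (snd z))) \<in> borel_measurable (Eexp \<Otimes>\<^sub>M (Uni \<Otimes>\<^sub>M \<theta>))" .
qed

lemma tail_E:
  assumes J: "finite J"
  shows "emeasure \<Omega> {\<omega> \<in> space \<Omega>. (\<Sum>k\<in>J. fst (\<omega> k)) < c} \<le> ennreal (exp c) * (1/2) ^ card J"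
proof -
  let ?A = "{\<omega> \<in> space \<Omega>. (\<Sum>k\<in>J. fst (\<omega> k)) < c}"
  have A: "?A \<in> sets \<Omega>" by measurable
  have pm: "(\<lambda>\<omega>. \<Prod>k\<in>J. ennreal (exp (- fst (\<omega> k)))) \<in> borel_measurable \<Omega>" by measurable
  have "emeasure \<Omega> ?A = (\<integral>\<^sup>+\<omega>. indicator ?A \<omega> \<partial>\<Omega>)" using A by simp
  also have "\<dots> \<le> (\<integral>\<^sup>+\<omega>. ennreal (exp c) * (\<Prod>k\<in>J. ennreal (exp (- fst (\<omega> k)))) \<partial>\<Omega>)"
  proof (rule nn_integral_mono)
    fix \<omega> assume "\<omega> \<in> space \<Omega>"
    show "indicator ?A \<omega> \<le> ennreal (exp c) * (\<Prod>k\<in>J. ennreal (exp (- fst (\<omega> k))))"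
    proof (cases "\<omega> \<in> ?A")
      case True
      have "(\<Prod>k\<in>J. ennreal (exp (- fst (\<omega> k)))) = ennreal (\<Prod>k\<in>J. exp (- fst (\<omega> k)))"
        by (rule prod_ennreal) simp
      also have "(\<Prod>k\<in>J. exp (- fst (\<omega> k))) = exp (- (\<Sum>k\<in>J. fst (\<omega> k)))"
        using exp_sum[OF J, of "\<lambda>k. - fst (\<omega> k)"] by (simp add: sum_negf)
      finally have "ennreal (exp c) * (\<Prod>k\<in>J. ennreal (exp (- fst (\<omega> k)))) = ennreal (exp (c - (\<Sum>k\<in>J. fst (\<omega> k))))"
        by (simp add: ennreal_mult[symmetric] exp_diff exp_minus field_simps)
      moreover have "1 \<le> exp (c - (\<Sum>k\<in>J. fst (\<omega> k)))" using True by simp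
      ultimately show ?thesis using True by simp
    qed simp
  qed
  also have "\<dots> = ennreal (exp c) * (\<integral>\<^sup>+\<omega>. (\<Prod>k\<in>J. ennreal (exp (- fst (\<omega> k)))) \<partial>\<Omega>)"
    by (rule nn_integral_cmult[OF pm])
  also have "(\<integral>\<^sup>+\<omega>. (\<Prod>k\<in>J. ennreal (exp (- fst (\<omega> k)))) \<partial>\<Omega>) = (1/2) ^ card J"
    using nn_prod[OF J expE_step_meas] nn_step_E by simp
  finally show ?thesis .
qed

lemma markov_S:
  assumes a: "0 < a"
  shows "emeasure \<Omega> {\<omega> \<in> space \<Omega>. a < (\<Sum>j<m. snd (snd (\<omega> j)))} \<le> ennreal (real m / a)"
proof -
  let ?A = "{\<omega> \<in> space \<Omega>. a < (\<Sum>j<m. snd (snd (\<omega> j)))}"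
  have A: "?A \<in> sets \<Omega>" by measurable
  have sm: "(\<lambda>\<omega>. \<Sum>j<m. ennreal (snd (snd (\<omega> j)))) \<in> borel_measurable \<Omega>" by measurable
  have "emeasure \<Omega> ?A = (\<integral>\<^sup>+\<omega>. indicator ?A \<omega> \<partial>\<Omega>)" using A by simp
  also have "\<dots> \<le> (\<integral>\<^sup>+\<omega>. ennreal (1/a) * (\<Sum>j<m. ennreal (snd (snd (\<omega> j)))) \<partial>\<Omega>)"
  proof (rule nn_integral_mono_AE)
    show "AE \<omega> in \<Omega>. indicator ?A \<omega> \<le> ennreal (1/a) * (\<Sum>j<m. ennreal (snd (snd (\<omega> j))))"
      using AE_JE
    proof eventually_elim
      case (elim \<omega>)
      show ?case
      proof (cases "\<omega> \<in> ?A")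
        case True
        have "(\<Sum>j<m. ennreal (snd (snd (\<omega> j)))) = ennreal (\<Sum>j<m. snd (snd (\<omega> j)))"
          using elim by (intro sum_ennreal) (auto intro: less_imp_le)
        then have "ennreal (1/a) * (\<Sum>j<m. ennreal (snd (snd (\<omega> j)))) = ennreal ((\<Sum>j<m. snd (snd (\<omega> j))) / a)"
          using a elim by (simp add: ennreal_mult[symmetric] sum_nonneg less_imp_le)
        moreover have "1 \<le> (\<Sum>j<m. snd (snd (\<omega> j))) / a" using True a by simp
        ultimately show ?thesis using True by simp
      qed simp
    qed
  qed
  also have "\<dots> = ennreal (1/a) * (\<integral>\<^sup>+\<omega>. (\<Sum>j<m. ennreal (snd (snd (\<omega> j)))) \<partial>\<Omega>)"
    by (rule nn_integral_cmult[OF sm])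
  also have "(\<integral>\<^sup>+\<omega>. (\<Sum>j<m. ennreal (snd (snd (\<omega> j)))) \<partial>\<Omega>) = (\<Sum>j<m. \<integral>\<^sup>+\<omega>. ennreal (snd (snd (\<omega> j))) \<partial>\<Omega>)"
    by (rule nn_integral_sum) measurable
  also have "\<dots> = of_nat m"
    using nn_Omega_comp[OF J_step_meas] nn_step_J by simp
  also have "ennreal (1/a) * of_nat m = ennreal (real m / a)"
    using a by (simp add: ennreal_mult[symmetric] ennreal_of_nat_eq_real_of_nat)
  finally show ?thesis .
qed

end


context sfl begin

lemma exp_half_lt2: "exp (1/2::real) < 2"
proof -
  have "exp (1/2::real) ^ 2 = exp 1" by (simp add: exp_of_nat_mult[symmetric])
  also have "\<dots> \<le> 3" by (rule exp_le)
  finally have "exp (1/2::real) ^ 2 < 2 ^ 2" by simp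
  then show ?thesis by (rule power_less_imp_less_base) simp
qed

definition Ablk :: "real \<Rightarrow> nat \<Rightarrow> (nat \<Rightarrow> real \<times> real \<times> real) set" where
  "Ablk K m = {\<omega> \<in> space \<Omega>. 2^m/2 \<le> (\<Sum>k\<in>{2^m..<2*2^m}. fst (\<omega> k))
       \<and> (\<Sum>j<2*2^m. snd (snd (\<omega> j))) \<le> 2 * K * 2^m}"

lemma Ablk_sets[measurable]: "Ablk K m \<in> sets \<Omega>"
  unfolding Ablk_def by measurable

lemma prob_Ablk:
  assumes K: "1 \<le> K"
  shows "1 - 1/K - (exp (1/2) / 2) ^ m \<le> measure \<Omega> (Ablk K m)"
proof -
  interpret P: prob_space \<Omega> by (rule prob_Omega)
  define q :: real where "q = exp (1/2) / 2"
  have q0: "0 < q" "q < 1" using exp_half_lt2 unfolding q_def by auto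
  define N :: nat where "N = 2^m"
  let ?B1 = "{\<omega> \<in> space \<Omega>. (\<Sum>k\<in>{N..<2*N}. fst (\<omega> k)) < real N / 2}"
  let ?B2 = "{\<omega> \<in> space \<Omega>. 2 * K * real N < (\<Sum>j<2*N. snd (snd (\<omega> j)))}"
  have B1: "?B1 \<in> sets \<Omega>" and B2: "?B2 \<in> sets \<Omega>" by measurable
  have "emeasure \<Omega> ?B1 \<le> ennreal (exp (real N / 2)) * (1/2) ^ card {N..<2*N}"
    by (rule tail_E) simp
  also have "\<dots> = ennreal (q ^ N)"
  proof -
    have e1: "exp (real N / 2) * (1/2) ^ N = q ^ N"
      unfolding q_def using exp_of_nat_mult[of N "1/2::real"]
      by (simp add: power_divide field_simps)
    have h: "(1/2::ennreal) = ennreal (1/2)" using divide_ennreal[of 1 2] by simp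
    have h2: "(1/2::ennreal) ^ N = ennreal (1/2) ^ N" by (simp only: h)
    have h3: "ennreal (1/2) ^ N = ennreal ((1/2) ^ N)" by (rule ennreal_power) simp
    have "(1/2::ennreal) ^ N = ennreal ((1/2) ^ N)" using h2 h3 by simp
    with e1
    show ?thesis by (simp add: ennreal_mult[symmetric])
  qed
  finally have m1: "measure \<Omega> ?B1 \<le> q ^ N"
    using q0 by (simp add: P.emeasure_eq_measure)
  have "emeasure \<Omega> ?B2 \<le> ennreal (real (2*N) / (2 * K * real N))"
    by (rule markov_S) (use K in \<open>simp add: N_def\<close>)
  also have "real (2*N) / (2 * K * real N) = 1/K" using K by (simp add: N_def)
  finally have m2: "measure \<Omega> ?B2 \<le> 1/K"
    using K by (simp add: P.emeasure_eq_measure)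
  have "space \<Omega> - Ablk K m \<subseteq> ?B1 \<union> ?B2"
    unfolding Ablk_def N_def by auto
  then have "measure \<Omega> (space \<Omega> - Ablk K m) \<le> measure \<Omega> (?B1 \<union> ?B2)"
    using B1 B2 by (intro P.finite_measure_mono) auto
  also have "\<dots> \<le> measure \<Omega> ?B1 + measure \<Omega> ?B2"
    using B1 B2 by (rule measure_subadditive) auto
  finally have c: "measure \<Omega> (space \<Omega> - Ablk K m) \<le> q ^ N + 1/K" using m1 m2 by simp
  have "q ^ N \<le> q ^ m"
    unfolding N_def using q0 by (intro power_decreasing) (auto intro: less_imp_le)
  moreover have "measure \<Omega> (space \<Omega> - Ablk K m) = 1 - measure \<Omega> (Ablk K m)"
    by (rule P.prob_compl) simp
  ultimately show ?thesis using c unfolding q_def by simp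
qed


lemma small_zero:
  fixes p :: real
  assumes "0 \<le> p" "\<And>K. 1 \<le> K \<Longrightarrow> p \<le> 1/K"
  shows "p = 0"
proof (rule ccontr)
  assume "p \<noteq> 0"
  then have pos: "0 < p" using assms(1) by simp
  define K where "K = max 1 (2 / p)"
  have K1: "1 \<le> K" unfolding K_def by simp
  have "2 / p \<le> K" unfolding K_def by simp
  then have "2 \<le> K * p" using pos by (simp add: divide_simps)
  moreover have "p * K \<le> 1" using assms(2)[OF K1] K1 by (simp add: divide_simps)
  ultimately show False using pos by (simp add: mult.commute)
qed

lemma prob_limsup:
  assumes K: "1 \<le> K"
  shows "1 - 1/K \<le> measure \<Omega> (\<Inter>M. \<Union>m\<in>{M..}. Ablk K m)"
proof -
  interpret P: prob_space \<Omega> by (rule prob_Omega)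
  define q :: real where "q = exp (1/2) / 2"
  have q0: "0 < q" "q < 1" using exp_half_lt2 unfolding q_def by auto
  define U where "U = (\<lambda>M. \<Union>m\<in>{M..}. Ablk K m)"
  have Us: "U M \<in> sets \<Omega>" for M unfolding U_def by auto
  have dec: "decseq U" unfolding U_def decseq_def by (auto intro: order_trans)
  have low: "1 - 1/K \<le> measure \<Omega> (U M)" for M
  proof (rule ccontr)
    assume "\<not> ?thesis"
    then have d: "0 < 1 - 1/K - measure \<Omega> (U M)" by simp
    obtain p where p: "q ^ p < 1 - 1/K - measure \<Omega> (U M)" using real_arch_pow_inv[OF d q0(2)] by blast
    define m where "m = max p M"
    have "q ^ m \<le> q ^ p" unfolding m_def using q0 by (intro power_decreasing) auto
    moreover have "measure \<Omega> (Ablk K m) \<le> measure \<Omega> (U M)"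
    proof (rule P.finite_measure_mono)
      show "Ablk K m \<subseteq> U M" unfolding U_def m_def by (intro UN_upper) simp
    qed (rule Us)
    moreover have "1 - 1/K - q ^ m \<le> measure \<Omega> (Ablk K m)" using prob_Ablk[OF K, of m] unfolding q_def .
    ultimately show False using p by simp
  qed
  have "(\<lambda>M. measure \<Omega> (U M)) \<longlonglongrightarrow> measure \<Omega> (\<Inter>M. U M)"
    using Us dec by (intro P.finite_Lim_measure_decseq) auto
  then have "1 - 1/K \<le> measure \<Omega> (\<Inter>M. U M)"
    by (rule LIMSEQ_le_const) (use low in auto)
  then show ?thesis unfolding U_def .
qed

lemma AE_nonexplode:
  assumes y: "\<forall>i. 0 \<le> y i" and n: "2 \<le> n" and t: "0 \<le> t"
  shows "AE \<omega> in \<Omega>. \<exists>k. t < stime n y \<omega> (Suc k)"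
proof -
  interpret P: prob_space \<Omega> by (rule prob_Omega)
  let ?Bad = "{\<omega> \<in> space \<Omega>. \<not> (\<exists>k. t < stime n y \<omega> (Suc k))}"
  have Bs: "?Bad \<in> sets \<Omega>" by measurable
  obtain N0 where N0: "{\<omega> \<in> space \<Omega>. \<not> (\<forall>k. 0 < snd (snd (\<omega> k)) \<and> 0 \<le> fst (\<omega> k))} \<subseteq> N0"
    "emeasure \<Omega> N0 = 0" "N0 \<in> sets \<Omega>"
    using AE_JE by (auto elim!: AE_E)
  have N0m: "measure \<Omega> N0 = 0" using N0 by (simp add: P.emeasure_eq_measure)
  have bnd: "measure \<Omega> ?Bad \<le> 1/K" if K: "1 \<le> K" for K :: real
  proof -
    let ?I = "\<Inter>M. \<Union>m\<in>{M..}. Ablk K m"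
    have Is: "?I \<in> sets \<Omega>" by auto
    have sub: "?Bad \<subseteq> (space \<Omega> - ?I) \<union> N0"
    proof
      fix \<omega> assume B: "\<omega> \<in> ?Bad"
      show "\<omega> \<in> (space \<Omega> - ?I) \<union> N0"
      proof (rule ccontr)
        assume "\<omega> \<notin> (space \<Omega> - ?I) \<union> N0"
        then have I: "\<omega> \<in> ?I" and nN: "\<omega> \<notin> N0" using B by auto
        have g: "good \<omega>" using nN N0(1) B unfolding good_def by blast
        have io: "\<forall>M. \<exists>m\<ge>M. 2^m / 2 \<le> (\<Sum>k\<in>{2^m..<2*2^m}. fst (\<omega> k))
                  \<and> (\<Sum>j<2*2^m. snd (snd (\<omega> j))) \<le> 2 * K * 2^m"
          using I unfolding Ablk_def by blast
        from det_explode[OF y g n K t io] B show False by simp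
      qed
    qed
    have "measure \<Omega> ?Bad \<le> measure \<Omega> ((space \<Omega> - ?I) \<union> N0)"
      using sub Is N0(3) by (intro P.finite_measure_mono) auto
    also have "\<dots> \<le> measure \<Omega> (space \<Omega> - ?I) + measure \<Omega> N0"
      using Is N0(3) by (intro measure_subadditive) auto
    also have "measure \<Omega> (space \<Omega> - ?I) = 1 - measure \<Omega> ?I" by (rule P.prob_compl[OF Is])
    finally show ?thesis using prob_limsup[OF K] N0m by simp
  qed
  have "measure \<Omega> ?Bad = 0"
    by (rule small_zero[OF measure_nonneg]) (use bnd in blast)
  then have "emeasure \<Omega> ?Bad = 0" by (simp add: P.emeasure_eq_measure)
  then show ?thesis by (subst AE_iff_measurable[OF Bs refl]) simp
qed

end


context sfl begin

lemma gap_space_nonneg: "y \<in> gap_space n \<Longrightarrow> \<forall>i. 0 \<le> y i"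
proof
  fix i assume y: "y \<in> gap_space n"
  show "0 \<le> y i"
  proof (cases "i \<in> {1..n-1}")
    case True then show ?thesis using y unfolding gap_space_def by blast
  next
    case False then have "y i = 0" using y unfolding gap_space_def by blast
    then show ?thesis by simp
  qed
qed

lemma feller:
  assumes n: "2 \<le> n" and fc: "continuous_on UNIV f" and fb: "bounded (range f)" and t: "0 \<le> t"
  shows "continuous_on (gap_space n) (\<lambda>y. gap_expect \<theta> n y t f)
         \<and> bounded ((\<lambda>y. gap_expect \<theta> n y t f) ` gap_space n)"
proof -
  interpret P: prob_space \<Omega> by (rule prob_Omega)
  obtain B where B: "\<And>x. norm (f x) \<le> B" using fb unfolding bounded_iff by auto
  have fm: "f \<in> borel_measurable borel" by (rule borel_measurable_continuous_onI[OF fc])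
  have sm: "(\<lambda>\<omega>. f (sgaps_at n y \<omega> t)) \<in> borel_measurable \<Omega>" for y
    using measurable_compose[OF cm_borel[OF sgaps_meas[OF th_sets]] fm] by simp
  have int: "integrable \<Omega> (\<lambda>\<omega>. f (sgaps_at n y \<omega> t))" for y
    by (rule P.integrable_const_bound[where B=B]) (use B sm in auto)
  have bnd: "norm (gap_expect \<theta> n y t f) \<le> B" for y
  proof -
    have "norm (gap_expect \<theta> n y t f) \<le> (\<integral>\<omega>. norm (f (sgaps_at n y \<omega> t)) \<partial>\<Omega>)"
      unfolding gap_expect_def by (rule integral_norm_bound)
    also have "\<dots> \<le> (\<integral>\<omega>. B \<partial>\<Omega>)"
      by (rule integral_mono) (use int B in auto)
    also have "\<dots> = B" by (simp add: P.prob_space)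
    finally show ?thesis .
  qed
  have cont: "continuous_on (gap_space n) (\<lambda>y. gap_expect \<theta> n y t f)"
  proof (rule continuous_on_sequentiallyI)
    fix u :: "nat \<Rightarrow> nat \<Rightarrow> real" and a
    assume u: "\<forall>i. u i \<in> gap_space n" and a: "a \<in> gap_space n" and lim: "u \<longlonglongrightarrow> a"
    have a0: "\<forall>i. 0 \<le> a i" using gap_space_nonneg[OF a] .
    have A1: "AE \<omega> in \<Omega>. \<forall>k. nb n (sstate n a \<omega> k) (fst (snd (\<omega> k)))" by (rule AE_nb[OF a0])
    have A2: "AE \<omega> in \<Omega>. \<forall>k. srate n (sstate n a \<omega> k) \<noteq> 0" by (rule AE_srate[OF a0])
    have A3: "AE \<omega> in \<Omega>. \<forall>k. t \<noteq> stime n a \<omega> (Suc k)" by (rule AE_t_ne[OF a0])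
    have A4: "AE \<omega> in \<Omega>. \<exists>k. t < stime n a \<omega> (Suc k)" by (rule AE_nonexplode[OF a0 n t])
    have AEc: "AE \<omega> in \<Omega>. isCont (\<lambda>y'. sgaps_at n y' \<omega> t) a"
      using A1 A2 A3 A4
    proof eventually_elim
      case (elim \<omega>)
      show ?case by (rule sgaps_cont) (use elim in auto)
    qed
    have "(\<lambda>i. integral\<^sup>L \<Omega> (\<lambda>\<omega>. f (sgaps_at n (u i) \<omega> t))) \<longlonglongrightarrow> integral\<^sup>L \<Omega> (\<lambda>\<omega>. f (sgaps_at n a \<omega> t))"
    proof (rule integral_dominated_convergence[where w="\<lambda>_. B"])
      show "AE \<omega> in \<Omega>. (\<lambda>i. f (sgaps_at n (u i) \<omega> t)) \<longlonglongrightarrow> f (sgaps_at n a \<omega> t)"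
        using AEc
      proof eventually_elim
        case (elim \<omega>)
        have "(\<lambda>i. sgaps_at n (u i) \<omega> t) \<longlonglongrightarrow> sgaps_at n a \<omega> t"
          by (rule isCont_tendsto_compose[OF elim lim])
        moreover have "isCont f (sgaps_at n a \<omega> t)"
          using fc continuous_on_eq_continuous_at open_UNIV by blast
        ultimately show ?case by (rule isCont_tendsto_compose[rotated])
      qed
    next
      show "(\<lambda>\<omega>. f (sgaps_at n a \<omega> t)) \<in> borel_measurable \<Omega>" by (rule sm)
    next
      fix i show "(\<lambda>\<omega>. f (sgaps_at n (u i) \<omega> t)) \<in> borel_measurable \<Omega>" by (rule sm)
    next
      show "integrable \<Omega> (\<lambda>_. B)" by simp
    next
      fix i show "AE \<omega> in \<Omega>. norm (f (sgaps_at n (u i) \<omega> t)) \<le> B" using B by simp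
    qed
    then show "(\<lambda>i. gap_expect \<theta> n (u i) t f) \<longlonglongrightarrow> gap_expect \<theta> n a t f"
      unfolding gap_expect_def .
  qed
  moreover have "bounded ((\<lambda>y. gap_expect \<theta> n y t f) ` gap_space n)"
    unfolding bounded_iff using bnd by blast
  ultimately show ?thesis by blast
qed

end

theorem lemma5p1:
  fixes n :: nat and \<theta> :: "real measure"
  assumes "2 \<le> n"
    and "prob_space \<theta>" and "sets \<theta> = sets borel" and "emeasure \<theta> {0<..} = 1"
    and "integrable \<theta> (\<lambda>x. x)" and "integral\<^sup>L \<theta> (\<lambda>x. x) = 1"
  shows "(\<forall>t \<delta> y. 0 \<le> t \<longrightarrow> 0 < \<delta> \<longrightarrow> y \<in> gap_space n \<longrightarrow>
            ((\<lambda>y'. coupled_prob \<theta> n y y' t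
                 (\<lambda>s. \<delta> \<le> (\<Sum>i=1..n-1. \<bar>fst s i - snd s i\<bar>)))
              \<longlongrightarrow> 0) (at y within gap_space n))
       \<and> (\<forall>f :: (nat \<Rightarrow> real) \<Rightarrow> real. \<forall>t. continuous_on UNIV f \<and> bounded (range f) \<and> 0 \<le> t \<longrightarrow>
            continuous_on (gap_space n) (\<lambda>y. gap_expect \<theta> n y t f)
            \<and> bounded ((\<lambda>y. gap_expect \<theta> n y t f) ` gap_space n))"
proof -
  interpret sfl \<theta> by (intro sfl.intro assms(2-6))
  show ?thesis
  proof (intro conjI allI impI)
    fix t \<delta> :: real and y :: "nat \<Rightarrow> real" assume "0 \<le> t" "0 < \<delta>" "y \<in> gap_space n"
    show "((\<lambda>y'. coupled_prob \<theta> n y y' t (\<lambda>s. \<delta> \<le> (\<Sum>i=1..n-1. \<bar>fst s i - snd s i\<bar>))) \<longlongrightarrow> 0) (at y within gap_space n)"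
      by (rule part1) fact
  next
    fix f :: "(nat \<Rightarrow> real) \<Rightarrow> real" and t :: real
    assume h: "continuous_on UNIV f \<and> bounded (range f) \<and> 0 \<le> t"
    show "continuous_on (gap_space n) (\<lambda>y. gap_expect \<theta> n y t f)"
      using feller[OF assms(1)] h by simp
    show "bounded ((\<lambda>y. gap_expect \<theta> n y t f) ` gap_space n)"
      using feller[OF assms(1)] h by simp
  qed
qed


end
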